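(* Let $g:\mathbb{R}^N\to\mathbb{R}$ and a family of random functions $g(\theta,\xi)$ differentiable in $\theta$ be given. Given $\theta_1,v_0\in\mathbb{R}^N$, define for $n\ge1$: $v_n=\alpha v_{n-1}+\epsilon_n\nabla_\theta g(\theta_n,\xi_n)$, $\theta_{n+1}=\theta_n-v_n$. Assume: (i) the $\xi_n$ are mutually independent and independent of $\theta_1,v_0$, and $g(x)=\mathbb{E}_{\xi_n}(g(x,\xi_n))$ for all $x$, $n$; (ii) $g$ is non-negative and continuously differentiable; $\{\theta:\nabla g(\theta)=0\}\ne\emptyset$; $\|\nabla g(x)-\nabla g(y)\|\le c\|x-y\|$ for some $c>0$; and there is $M>0$ with $\mathbb{E}_{\xi_n}\big(\|\nabla_\theta g(\theta)-\nabla_\theta g(\theta,\xi_n)\|^2\big)\le M(1+g(\theta))$ for all $\theta$, $n$; (iii) $\alpha\in[0,1)$, and $\epsilon_n>0$ decreases monotonically to $0$ with $\sum\epsilon_n=\infty$, $\sum\epsilon_n^2<\infty$. Then there is a constant $B(v_0,\theta_1)>0$ depending only on $v_0$ and $\theta_1$ such that for all $n\ge1$, $$\sum_{t=1}^n\epsilon_t\,\mathbb{E}\big(\|\nabla_\theta g(\theta_t)\|^2\big)<B(v_0,\theta_1)<+\infty,$$ and $\sum_{t=1}^{\infty}\epsilon_t\|\nabla_\theta g(\theta_t)\|^2<+\infty$ almost surely.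
   Context: $\|\cdot\|$ is the Euclidean norm; $\mathbb{E}_{\xi_n}$ denotes expectation with respect to $\xi_n$ only. *)

theory Defs
  imports "HOL-Probability.Probability"
begin

text \<open>Stochastic gradient descent with heavy-ball momentum.
  The state after k steps is (theta_(k+1), v_k):
  v_n = alpha v_(n-1) + eps_n DG(theta_n, xi_n),  theta_(n+1) = theta_n - v_n.\<close>

fun sgdm_state ::
  "real \<Rightarrow> (nat \<Rightarrow> real) \<Rightarrow> ('a::real_vector \<Rightarrow> 'b \<Rightarrow> 'a) \<Rightarrow> (nat \<Rightarrow> 'w \<Rightarrow> 'b)
    \<Rightarrow> 'a \<Rightarrow> 'a \<Rightarrow> nat \<Rightarrow> 'w \<Rightarrow> 'a \<times> 'a" where
  "sgdm_state \<alpha> \<epsilon> DG \<xi> \<theta>1 v0 0 \<omega> = (\<theta>1, v0)"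
| "sgdm_state \<alpha> \<epsilon> DG \<xi> \<theta>1 v0 (Suc k) \<omega> =
     (let (\<theta>, v) = sgdm_state \<alpha> \<epsilon> DG \<xi> \<theta>1 v0 k \<omega>;
          v' = \<alpha> *\<^sub>R v + \<epsilon> (Suc k) *\<^sub>R DG \<theta> (\<xi> (Suc k) \<omega>)
      in (\<theta> - v', v'))"

text \<open>theta_n for n >= 1 (the value at n = 0 is irrelevant).\<close>
definition sgdm_theta ::
  "real \<Rightarrow> (nat \<Rightarrow> real) \<Rightarrow> ('a::real_vector \<Rightarrow> 'b \<Rightarrow> 'a) \<Rightarrow> (nat \<Rightarrow> 'w \<Rightarrow> 'b)
    \<Rightarrow> 'a \<Rightarrow> 'a \<Rightarrow> nat \<Rightarrow> 'w \<Rightarrow> 'a" where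
  "sgdm_theta \<alpha> \<epsilon> DG \<xi> \<theta>1 v0 n \<omega> = fst (sgdm_state \<alpha> \<epsilon> DG \<xi> \<theta>1 v0 (n - 1) \<omega>)"

end

theory Submission
  imports Defs "HOL-Probability.Probability"
begin

lemma line_deriv:
  fixes g :: "'a::real_inner \<Rightarrow> real"
  assumes gd: "\<And>x. (g has_derivative (\<lambda>h. Dg x \<bullet> h)) (at x)"
  shows "((\<lambda>t. g (x + t *\<^sub>R d)) has_real_derivative (Dg (x + t *\<^sub>R d) \<bullet> d)) (at t)"
proof -
  have l: "((\<lambda>t. x + t *\<^sub>R d) has_derivative (\<lambda>h. h *\<^sub>R d)) (at t)"
    by (auto intro!: derivative_eq_intros)
  have "((\<lambda>t. g (x + t *\<^sub>R d)) has_derivative (\<lambda>h. Dg (x + t *\<^sub>R d) \<bullet> (h *\<^sub>R d))) (at t)"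
    using has_derivative_compose[OF l gd] by (simp add: o_def)
  then show ?thesis
    unfolding has_field_derivative_def
    by (rule has_derivative_eq_rhs) (simp add: fun_eq_iff mult.commute)
qed
lemma descent:
  fixes g :: "'a::real_inner \<Rightarrow> real"
  assumes gd: "\<And>x. (g has_derivative (\<lambda>h. Dg x \<bullet> h)) (at x)"
    and lip: "\<And>x y. norm (Dg x - Dg y) \<le> c * norm (x - y)"
  shows "g y \<le> g x + Dg x \<bullet> (y - x) + c / 2 * (norm (y - x))\<^sup>2"
proof -
  define d where "d = y - x"
  define k where "k t = g (x + t *\<^sub>R d) - t * (Dg x \<bullet> d) - c / 2 * t\<^sup>2 * (norm d)\<^sup>2" for t
  have "k 1 \<le> k 0"
  proof (rule DERIV_nonpos_imp_nonincreasing[of 0 1 k])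
    fix t :: real assume t: "0 \<le> t" "t \<le> 1"
    have D: "(k has_real_derivative (Dg (x + t *\<^sub>R d) \<bullet> d - Dg x \<bullet> d - c * t * (norm d)\<^sup>2)) (at t)"
      unfolding k_def
      by (rule derivative_eq_intros line_deriv[OF gd] refl | simp)+
    have "Dg (x + t *\<^sub>R d) \<bullet> d - Dg x \<bullet> d = (Dg (x + t *\<^sub>R d) - Dg x) \<bullet> d"
      by (simp add: inner_diff_left)
    also have "\<dots> \<le> norm (Dg (x + t *\<^sub>R d) - Dg x) * norm d"
      by (rule norm_cauchy_schwarz)
    also have "\<dots> \<le> c * norm (t *\<^sub>R d) * norm d"
      using lip[of "x + t *\<^sub>R d" x] by (intro mult_right_mono) auto
    also have "\<dots> = c * t * (norm d)\<^sup>2" using t by (simp add: power2_eq_square)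
    finally show "\<exists>y. (k has_real_derivative y) (at t) \<and> y \<le> 0"
      using D by (intro exI[of _ "Dg (x + t *\<^sub>R d) \<bullet> d - Dg x \<bullet> d - c * t * (norm d)\<^sup>2"]) auto
  qed auto
  then show ?thesis by (simp add: k_def d_def algebra_simps)
qed
lemma nn_bound_integrable:
  fixes f :: "'b \<Rightarrow> real"
  assumes "f \<in> borel_measurable M" "\<And>x. 0 \<le> f x" "(\<integral>\<^sup>+x. ennreal (f x) \<partial>M) \<le> ennreal K" "0 \<le> K"
  shows "integrable M f" "integral\<^sup>L M f \<le> K"
proof -
  show i: "integrable M f"
    using assms by (intro integrableI_nonneg) (auto simp: top_unique intro: le_less_trans)
  have "ennreal (integral\<^sup>L M f) = (\<integral>\<^sup>+x. ennreal (f x) \<partial>M)"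
    using assms i by (subst nn_integral_eq_integral) auto
  then have "ennreal (integral\<^sup>L M f) \<le> ennreal K" using assms by simp
  moreover have "0 \<le> integral\<^sup>L M f" using assms by (simp add: integral_nonneg)
  ultimately show "integral\<^sup>L M f \<le> K" using assms(4)
    by (simp add: ennreal_le_iff)
qed

lemma sq_le_cs_interval:
  fixes f :: "real \<Rightarrow> real"
  assumes h: "0 < h" and I: "(f has_integral I) {0..h}" and J: "((\<lambda>s. (f s)\<^sup>2) has_integral J) {0..h}"
  shows "I\<^sup>2 / h \<le> J"
proof -
  define a where "a = I / h"
  have "((\<lambda>s. (f s)\<^sup>2 - 2 * a * f s + a\<^sup>2) has_integral (J - 2 * a * I + a\<^sup>2 * h)) {0..h}"
    using h by (intro has_integral_diff has_integral_add has_integral_mult_right J I has_integral_const_real[THEN has_integral_eq_rhs]) (auto simp: content_real)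
  then have "((\<lambda>s. (f s - a)\<^sup>2) has_integral (J - 2 * a * I + a\<^sup>2 * h)) {0..h}"
    by (rule has_integral_eq[rotated]) (simp add: power2_eq_square algebra_simps)
  then have "0 \<le> J - 2 * a * I + a\<^sup>2 * h"
    by (rule has_integral_nonneg) auto
  then show ?thesis using h by (simp add: a_def power2_eq_square field_simps)
qed


lemma sq_sum_le: fixes a b :: real shows "(a + b)\<^sup>2 \<le> 2 * a\<^sup>2 + 2 * b\<^sup>2"
proof -
  have "0 \<le> (a - b)\<^sup>2" by simp
  then show ?thesis by (simp add: power2_eq_square algebra_simps)
qed

locale unb =
  fixes \<mu> :: "'b measure"
    and g :: "'a::euclidean_space \<Rightarrow> real" and Dg :: "'a \<Rightarrow> 'a"
    and G :: "'a \<Rightarrow> 'b \<Rightarrow> real" and DG :: "'a \<Rightarrow> 'b \<Rightarrow> 'a"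
    and c M :: real
  assumes prob: "prob_space \<mu>"
    and DGm: "(\<lambda>(x, e). DG x e) \<in> borel_measurable (borel \<Otimes>\<^sub>M \<mu>)"
    and Gd: "\<And>x e. e \<in> space \<mu> \<Longrightarrow> ((\<lambda>y. G y e) has_derivative (\<lambda>h. DG x e \<bullet> h)) (at x)"
    and gm: "\<And>x. has_bochner_integral \<mu> (G x) (g x)"
    and gd: "\<And>x. (g has_derivative (\<lambda>h. Dg x \<bullet> h)) (at x)"
    and lip: "\<And>x y. norm (Dg x - Dg y) \<le> c * norm (x - y)"
    and c0: "0 \<le> c" and M0: "0 \<le> M"
    and gnn: "\<And>x. 0 \<le> g x"
    and var: "\<And>\<theta>. (\<integral>\<^sup>+ e. ennreal ((norm (Dg \<theta> - DG \<theta> e))\<^sup>2) \<partial>\<mu>) \<le> ennreal (M * (1 + g \<theta>))"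

context unb
begin

declare DGm[measurable]

lemma DG_meas1[measurable]: "(\<lambda>e. DG z e) \<in> borel_measurable \<mu>"
  by measurable

lemma second_moment:
  "(\<integral>\<^sup>+ e. ennreal ((norm (DG z e))\<^sup>2) \<partial>\<mu>) \<le> ennreal (2 * (norm (Dg z))\<^sup>2 + 2 * (M * (1 + g z)))"
proof -
  interpret prob_space \<mu> by (rule prob)
  have pw: "(norm (DG z e))\<^sup>2 \<le> 2 * (norm (Dg z))\<^sup>2 + 2 * (norm (Dg z - DG z e))\<^sup>2" for e
  proof -
    have "norm (DG z e) \<le> norm (Dg z) + norm (Dg z - DG z e)"
      by (metis add_diff_cancel_left' diff_diff_eq2 norm_triangle_ineq4)
    then have "(norm (DG z e))\<^sup>2 \<le> (norm (Dg z) + norm (Dg z - DG z e))\<^sup>2"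
      by (intro power_mono) auto
    also have "\<dots> \<le> 2 * (norm (Dg z))\<^sup>2 + 2 * (norm (Dg z - DG z e))\<^sup>2"
      by (rule sq_sum_le)
    finally show ?thesis .
  qed
  have "(\<integral>\<^sup>+ e. ennreal ((norm (DG z e))\<^sup>2) \<partial>\<mu>)
      \<le> (\<integral>\<^sup>+ e. ennreal (2 * (norm (Dg z))\<^sup>2) + 2 * ennreal ((norm (Dg z - DG z e))\<^sup>2) \<partial>\<mu>)"
    by (intro nn_integral_mono order_trans[OF ennreal_leI[OF pw]]) (simp add: ennreal_plus ennreal_mult)
  also have "\<dots> = ennreal (2 * (norm (Dg z))\<^sup>2) + 2 * (\<integral>\<^sup>+ e. ennreal ((norm (Dg z - DG z e))\<^sup>2) \<partial>\<mu>)"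
    by (subst nn_integral_add) (auto simp: nn_integral_cmult emeasure_space_1)
  also have "\<dots> \<le> ennreal (2 * (norm (Dg z))\<^sup>2) + 2 * ennreal (M * (1 + g z))"
    by (intro add_left_mono mult_left_mono var) auto
  also have "\<dots> = ennreal (2 * (norm (Dg z))\<^sup>2 + 2 * (M * (1 + g z)))"
    using M0 gnn[of z] by (simp add: ennreal_mult ennreal_plus)
  finally show ?thesis .
qed

end


context unb
begin

definition K0 :: "'a \<Rightarrow> 'a \<Rightarrow> real" where
  "K0 x u = 2 * (norm (Dg x) + c * norm u)\<^sup>2 + 2 * (M * (1 + (g x + norm (Dg x) * norm u + c / 2 * (norm u)\<^sup>2)))"

lemma seg_bound:
  assumes s: "0 \<le> s" "s \<le> 1"
  shows "2 * (norm (Dg (x + s *\<^sub>R u)))\<^sup>2 + 2 * (M * (1 + g (x + s *\<^sub>R u))) \<le> K0 x u"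
proof -
  let ?z = "x + s *\<^sub>R u"
  have snu: "s * norm u \<le> norm u" using mult_right_mono[OF s(2) norm_ge_zero[of u]] by simp
  have "norm (Dg ?z) \<le> norm (Dg x) + norm (Dg ?z - Dg x)"
    by (metis add.commute diff_add_cancel norm_triangle_ineq)
  also have "norm (Dg ?z - Dg x) \<le> c * norm u"
  proof -
    have "s * norm u \<le> norm u" using mult_right_mono[OF s(2) norm_ge_zero[of u]] by simp
    then have "c * (s * norm u) \<le> c * norm u" using c0 by (rule mult_left_mono)
    moreover have "norm (Dg ?z - Dg x) \<le> c * (s * norm u)" using lip[of ?z x] s by simp
    ultimately show ?thesis by linarith
  qed
  finally have n1: "norm (Dg ?z) \<le> norm (Dg x) + c * norm u" by simp
  have "g ?z \<le> g x + Dg x \<bullet> (?z - x) + c / 2 * (norm (?z - x))\<^sup>2"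
    by (rule descent[OF gd lip])
  also have "Dg x \<bullet> (?z - x) \<le> norm (Dg x) * norm u"
  proof -
    have "Dg x \<bullet> (?z - x) \<le> norm (Dg x) * norm (?z - x)" by (rule norm_cauchy_schwarz)
    also have "norm (?z - x) \<le> norm u" using s snu by simp
    finally show ?thesis by (simp add: mult_left_mono)
  qed
  also have "(norm (?z - x))\<^sup>2 \<le> (norm u)\<^sup>2" using s snu by (intro power_mono) auto
  finally have g1: "g ?z \<le> g x + norm (Dg x) * norm u + c / 2 * (norm u)\<^sup>2"
    using c0 by (simp add: mult_left_mono)
  have "(norm (Dg ?z))\<^sup>2 \<le> (norm (Dg x) + c * norm u)\<^sup>2"
    using n1 by (intro power_mono) auto
  moreover have "M * (1 + g ?z) \<le> M * (1 + (g x + norm (Dg x) * norm u + c / 2 * (norm u)\<^sup>2))"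
    using g1 M0 by (intro mult_left_mono) auto
  ultimately show ?thesis unfolding K0_def by linarith
qed

lemma K0_nonneg: "0 \<le> K0 x u"
  unfolding K0_def using M0 gnn[of x] c0 by (intro add_nonneg_nonneg mult_nonneg_nonneg) auto

lemma phi_moment:
  assumes s: "0 \<le> s" "s \<le> 1"
  shows "(\<integral>\<^sup>+ e. ennreal ((DG (x + s *\<^sub>R u) e \<bullet> u)\<^sup>2) \<partial>\<mu>) \<le> ennreal (K0 x u * (norm u)\<^sup>2)"
proof -
  let ?z = "x + s *\<^sub>R u"
  have pw: "(DG ?z e \<bullet> u)\<^sup>2 \<le> (norm (DG ?z e))\<^sup>2 * (norm u)\<^sup>2" for e
  proof -
    have "\<bar>DG ?z e \<bullet> u\<bar> \<le> norm (DG ?z e) * norm u" by (rule Cauchy_Schwarz_ineq2)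
    then have "\<bar>DG ?z e \<bullet> u\<bar>\<^sup>2 \<le> (norm (DG ?z e) * norm u)\<^sup>2" by (intro power_mono) auto
    then show ?thesis by (simp add: power_mult_distrib)
  qed
  have "(\<integral>\<^sup>+ e. ennreal ((DG ?z e \<bullet> u)\<^sup>2) \<partial>\<mu>) \<le> (\<integral>\<^sup>+ e. ennreal ((norm (DG ?z e))\<^sup>2) * ennreal ((norm u)\<^sup>2) \<partial>\<mu>)"
    by (intro nn_integral_mono) (simp add: ennreal_mult[symmetric] pw)
  also have "\<dots> = (\<integral>\<^sup>+ e. ennreal ((norm (DG ?z e))\<^sup>2) \<partial>\<mu>) * ennreal ((norm u)\<^sup>2)"
    by (rule nn_integral_multc) measurable
  also have "\<dots> \<le> ennreal (2 * (norm (Dg ?z))\<^sup>2 + 2 * (M * (1 + g ?z))) * ennreal ((norm u)\<^sup>2)"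
    by (intro mult_right_mono second_moment) auto
  also have "\<dots> \<le> ennreal (K0 x u) * ennreal ((norm u)\<^sup>2)"
    by (intro mult_right_mono ennreal_leI seg_bound s) auto
  also have "\<dots> = ennreal (K0 x u * (norm u)\<^sup>2)"
    using K0_nonneg by (simp add: ennreal_mult)
  finally show ?thesis .
qed


lemma pointwise_cs:
  assumes e: "e \<in> space \<mu>" and h: "0 < h"
  shows "ennreal ((G (x + h *\<^sub>R u) e - G x e)\<^sup>2 / h)
    \<le> (\<integral>\<^sup>+ s. ennreal (indicator {0..h} s * (DG (x + s *\<^sub>R u) e \<bullet> u)\<^sup>2) \<partial>lborel)"
    (is "_ \<le> ?J")
proof (cases ?J)
  case top then show ?thesis by simp
next
  case (real J)
  let ?f = "\<lambda>s. DG (x + s *\<^sub>R u) e \<bullet> u"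
  have em: "(\<lambda>s::real. e) \<in> measurable borel \<mu>" using e by simp
  have fm: "?f \<in> borel_measurable borel"
    using measurable_Pair_compose_split[OF DGm, of "\<lambda>s. x + s *\<^sub>R u" borel "\<lambda>s. e", OF _ em]
    by measurable
  have "((\<lambda>s. indicator {0..h} s * (?f s)\<^sup>2) has_integral J) UNIV"
    by (rule nn_integral_has_integral) (use fm real in auto)
  moreover have "(\<lambda>s. indicator {0..h} s * (?f s)\<^sup>2) = (\<lambda>s. if s \<in> {0..h} then (?f s)\<^sup>2 else 0)"
    by (auto simp: fun_eq_iff indicator_def)
  ultimately have J: "((\<lambda>s. (?f s)\<^sup>2) has_integral J) {0..h}"
    by (simp only: has_integral_restrict_UNIV)
  have I: "(?f has_integral (G (x + h *\<^sub>R u) e - G (x + 0 *\<^sub>R u) e)) {0..h}"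
  proof (rule fundamental_theorem_of_calculus)
    show "0 \<le> h" using h by simp
    fix t assume "t \<in> {0..h}"
    have "((\<lambda>t. G (x + t *\<^sub>R u) e) has_real_derivative ?f t) (at t)"
      by (rule line_deriv[of "\<lambda>y. G y e" "\<lambda>z. DG z e"]) (rule Gd[OF e])
    then show "((\<lambda>t. G (x + t *\<^sub>R u) e) has_vector_derivative ?f t) (at t within {0..h})"
      by (simp add: has_real_derivative_iff_has_vector_derivative has_vector_derivative_at_within)
  qed
  have "(G (x + h *\<^sub>R u) e - G x e)\<^sup>2 / h \<le> J"
    using sq_le_cs_interval[OF h I J] by simp
  then show ?thesis using real by (simp add: ennreal_leI)
qed

end


context unb
begin


lemma G_int: "integrable \<mu> (G y)"
  using gm[of y] by (simp add: has_bochner_integral_iff)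

lemma G_meas[measurable]: "G y \<in> borel_measurable \<mu>"
  using G_int by (rule borel_measurable_integrable)

lemma quot_moment:
  assumes h: "0 < h" "h \<le> 1"
  shows "integrable \<mu> (\<lambda>e. ((G (x + h *\<^sub>R u) e - G x e) / h)\<^sup>2)"
    "(\<integral>e. ((G (x + h *\<^sub>R u) e - G x e) / h)\<^sup>2 \<partial>\<mu>) \<le> K0 x u * (norm u)\<^sup>2"
proof -
  interpret prob_space \<mu> by (rule prob)
  interpret pair_sigma_finite \<mu> lborel
    by (intro pair_sigma_finite.intro prob_space_imp_sigma_finite prob lborel.sigma_finite_measure_axioms)
  let ?K = "K0 x u * (norm u)\<^sup>2"
  have K: "0 \<le> ?K" using K0_nonneg by simp
  let ?F = "\<lambda>e. (G (x + h *\<^sub>R u) e - G x e)\<^sup>2 / h"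
  have "(\<integral>\<^sup>+ e. ennreal (?F e) \<partial>\<mu>)
      \<le> (\<integral>\<^sup>+ e. \<integral>\<^sup>+ s. ennreal (indicator {0..h} s * (DG (x + s *\<^sub>R u) e \<bullet> u)\<^sup>2) \<partial>lborel \<partial>\<mu>)"
    by (intro nn_integral_mono pointwise_cs h)
  also have "\<dots> = (\<integral>\<^sup>+ s. \<integral>\<^sup>+ e. ennreal (indicator {0..h} s * (DG (x + s *\<^sub>R u) e \<bullet> u)\<^sup>2) \<partial>\<mu> \<partial>lborel)"
    by (rule Fubini'[symmetric]) measurable
  also have "\<dots> \<le> (\<integral>\<^sup>+ s. ennreal ?K * indicator {0..h} s \<partial>lborel)"
  proof (intro nn_integral_mono)
    fix s :: real
    show "(\<integral>\<^sup>+ e. ennreal (indicator {0..h} s * (DG (x + s *\<^sub>R u) e \<bullet> u)\<^sup>2) \<partial>\<mu>) \<le> ennreal ?K * indicator {0..h} s"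
    proof (cases "s \<in> {0..h}")
      case True
      then show ?thesis using phi_moment[of s x u] h by simp
    next
      case False
      then show ?thesis by simp
    qed
  qed
  also have "\<dots> = ennreal (?K * h)"
    using h K by (simp add: nn_integral_cmult_indicator ennreal_mult)
  finally have b: "(\<integral>\<^sup>+ e. ennreal (?F e) \<partial>\<mu>) \<le> ennreal (?K * h)" .
  have Fm: "?F \<in> borel_measurable \<mu>" by measurable
  have Fi: "integrable \<mu> ?F" and Fb: "integral\<^sup>L \<mu> ?F \<le> ?K * h"
    using nn_bound_integrable[OF Fm _ b] h K by auto
  have eq: "(\<lambda>e. ((G (x + h *\<^sub>R u) e - G x e) / h)\<^sup>2) = (\<lambda>e. ?F e / h)"
    using h by (auto simp: fun_eq_iff power2_eq_square field_simps)
  show "integrable \<mu> (\<lambda>e. ((G (x + h *\<^sub>R u) e - G x e) / h)\<^sup>2)"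
    unfolding eq by (rule integrable_divide[OF Fi])
  have "(\<integral>e. ?F e / h \<partial>\<mu>) = integral\<^sup>L \<mu> ?F / h" by simp
  also have "\<dots> \<le> ?K" using Fb h by (simp add: divide_le_eq)
  finally show "(\<integral>e. ((G (x + h *\<^sub>R u) e - G x e) / h)\<^sup>2 \<partial>\<mu>) \<le> ?K" unfolding eq .
qed

end


lemma trunc_ineq:
  fixes d T :: real assumes T: "0 < T"
  shows "\<bar>d\<bar> \<le> min \<bar>d\<bar> T + d\<^sup>2 / T"
proof (cases "\<bar>d\<bar> \<le> T")
  case True then show ?thesis using T by simp
next
  case False
  then have "T * \<bar>d\<bar> \<le> \<bar>d\<bar> * \<bar>d\<bar>" by (intro mult_right_mono) auto
  then have "\<bar>d\<bar> \<le> \<bar>d\<bar> * \<bar>d\<bar> / T" using T by (simp add: field_simps)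
  moreover have "\<bar>d\<bar> * \<bar>d\<bar> = d\<^sup>2" by (simp add: power2_eq_square)
  ultimately show ?thesis using False T by simp
qed

lemma abs_le_1_sq: fixes a :: real shows "\<bar>a\<bar> \<le> 1 + a\<^sup>2"
proof (cases "\<bar>a\<bar> \<le> 1")
  case True then show ?thesis by (simp add: add_increasing2)
next
  case False
  then have "\<bar>a\<bar> * 1 \<le> \<bar>a\<bar> * \<bar>a\<bar>" by (intro mult_left_mono) auto
  then show ?thesis by (simp add: power2_eq_square)
qed

lemma hh_at0: "filterlim (\<lambda>j. inverse (real (Suc j))) (at (0::real)) sequentially"
  by (rule filterlim_atI[OF LIMSEQ_inverse_real_of_nat]) auto

context unb
begin

lemma unbiased:
  shows "integrable \<mu> (\<lambda>e. DG x e \<bullet> u)" and "(\<integral>e. DG x e \<bullet> u \<partial>\<mu>) = Dg x \<bullet> u"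
proof -
  interpret prob_space \<mu> by (rule prob)
  define K where "K = K0 x u * (norm u)\<^sup>2"
  have K: "0 \<le> K" unfolding K_def using K0_nonneg by simp
  define hh where "hh j = inverse (real (Suc j))" for j
  define q where "q j e = (G (x + hh j *\<^sub>R u) e - G x e) / hh j" for j e
  define \<phi> where "\<phi> e = DG x e \<bullet> u" for e
  have hh: "0 < hh j" "hh j \<le> 1" for j unfolding hh_def by (auto simp: field_simps)
  have q2i: "integrable \<mu> (\<lambda>e. (q j e)\<^sup>2)" and q2b: "(\<integral>e. (q j e)\<^sup>2 \<partial>\<mu>) \<le> K" for j
    unfolding q_def K_def using quot_moment[OF hh] by auto
  have \<phi>m[measurable]: "\<phi> \<in> borel_measurable \<mu>" unfolding \<phi>_def by measurable
  have \<phi>2n: "(\<integral>\<^sup>+ e. ennreal ((\<phi> e)\<^sup>2) \<partial>\<mu>) \<le> ennreal K"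
    unfolding \<phi>_def K_def using phi_moment[of 0 x u] by simp
  have \<phi>2i: "integrable \<mu> (\<lambda>e. (\<phi> e)\<^sup>2)" and \<phi>2b: "(\<integral>e. (\<phi> e)\<^sup>2 \<partial>\<mu>) \<le> K"
    using nn_bound_integrable[OF _ _ \<phi>2n K] by auto
  have \<phi>i: "integrable \<mu> \<phi>"
  proof (rule Bochner_Integration.integrable_bound)
    show "integrable \<mu> (\<lambda>e. 1 + (\<phi> e)\<^sup>2)" using \<phi>2i by simp
    show "AE e in \<mu>. norm (\<phi> e) \<le> norm (1 + (\<phi> e)\<^sup>2)"
      using abs_le_1_sq by (auto intro: order_trans)
  qed simp
  then show "integrable \<mu> (\<lambda>e. DG x e \<bullet> u)" unfolding \<phi>_def .
  have qm[measurable]: "q j \<in> borel_measurable \<mu>" for j unfolding q_def by measurable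
  have qi: "integrable \<mu> (q j)" for j
    unfolding q_def by (intro integrable_divide Bochner_Integration.integrable_diff G_int)
  have Eq: "(\<integral>e. q j e \<partial>\<mu>) = (g (x + hh j *\<^sub>R u) - g x) / hh j" for j
    unfolding q_def using gm by (simp add: Bochner_Integration.integral_diff[OF G_int G_int] has_bochner_integral_iff)
  have hlim: "filterlim hh (at 0) sequentially" unfolding hh_def by (rule hh_at0)
  have lim1: "(\<lambda>j. \<integral>e. q j e \<partial>\<mu>) \<longlonglongrightarrow> Dg x \<bullet> u"
  proof -
    have "((\<lambda>t. g (x + t *\<^sub>R u)) has_real_derivative (Dg x \<bullet> u)) (at 0)"
      using line_deriv[OF gd, of x u 0] by simp
    then have "((\<lambda>k. (g (x + (0 + k) *\<^sub>R u) - g (x + 0 *\<^sub>R u)) / k) \<longlongrightarrow> Dg x \<bullet> u) (at 0)"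
      by (simp add: DERIV_def)
    from filterlim_compose[OF this hlim] show ?thesis by (simp add: Eq)
  qed
  have limpt: "(\<lambda>j. q j e) \<longlonglongrightarrow> \<phi> e" if e: "e \<in> space \<mu>" for e
  proof -
    have "((\<lambda>t. G (x + t *\<^sub>R u) e) has_real_derivative (DG x e \<bullet> u)) (at 0)"
      using line_deriv[of "\<lambda>y. G y e" "\<lambda>z. DG z e" x u 0, OF Gd[OF e]] by simp
    then have "((\<lambda>k. (G (x + (0 + k) *\<^sub>R u) e - G (x + 0 *\<^sub>R u) e) / k) \<longlongrightarrow> DG x e \<bullet> u) (at 0)"
      by (simp add: DERIV_def)
    from filterlim_compose[OF this hlim] show ?thesis by (simp add: q_def \<phi>_def)
  qed
  define D where "D j e = q j e - \<phi> e" for j e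
  have Dm[measurable]: "D j \<in> borel_measurable \<mu>" for j unfolding D_def by measurable
  have D2i: "integrable \<mu> (\<lambda>e. (D j e)\<^sup>2)" and D2b: "(\<integral>e. (D j e)\<^sup>2 \<partial>\<mu>) \<le> 4 * K" for j
  proof -
    have pw: "(D j e)\<^sup>2 \<le> 2 * (q j e)\<^sup>2 + 2 * (\<phi> e)\<^sup>2" for e
      using sq_sum_le[of "q j e" "- \<phi> e"] by (simp add: D_def)
    have bi: "integrable \<mu> (\<lambda>e. 2 * (q j e)\<^sup>2 + 2 * (\<phi> e)\<^sup>2)" using q2i \<phi>2i by simp
    show D2i: "integrable \<mu> (\<lambda>e. (D j e)\<^sup>2)"
      by (rule Bochner_Integration.integrable_bound[OF bi]) (use pw in \<open>auto intro: order_trans\<close>)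
    have "(\<integral>e. (D j e)\<^sup>2 \<partial>\<mu>) \<le> (\<integral>e. 2 * (q j e)\<^sup>2 + 2 * (\<phi> e)\<^sup>2 \<partial>\<mu>)"
      by (rule integral_mono[OF D2i bi pw])
    also have "\<dots> = 2 * (\<integral>e. (q j e)\<^sup>2 \<partial>\<mu>) + 2 * (\<integral>e. (\<phi> e)\<^sup>2 \<partial>\<mu>)"
      using q2i \<phi>2i by simp
    also have "\<dots> \<le> 4 * K" using q2b[of j] \<phi>2b by simp
    finally show "(\<integral>e. (D j e)\<^sup>2 \<partial>\<mu>) \<le> 4 * K" .
  qed
  have mlim: "(\<lambda>j. \<integral>e. min \<bar>D j e\<bar> T \<partial>\<mu>) \<longlonglongrightarrow> 0" if T: "0 < T" for T
  proof -
    have "(\<lambda>j. \<integral>e. min \<bar>D j e\<bar> T \<partial>\<mu>) \<longlonglongrightarrow> (\<integral>e. 0 \<partial>\<mu>)"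
    proof (rule integral_dominated_convergence[where w="\<lambda>_. T"])
      show "AE e in \<mu>. (\<lambda>j. min \<bar>D j e\<bar> T) \<longlonglongrightarrow> 0"
      proof (rule AE_I2)
        fix e assume e: "e \<in> space \<mu>"
        have "(\<lambda>j. D j e) \<longlonglongrightarrow> 0"
          unfolding D_def using tendsto_diff[OF limpt[OF e] tendsto_const[of "\<phi> e"]] by simp
        then have "(\<lambda>j. min \<bar>D j e\<bar> T) \<longlonglongrightarrow> min \<bar>0\<bar> T"
          by (intro tendsto_min tendsto_rabs tendsto_const)
        then show "(\<lambda>j. min \<bar>D j e\<bar> T) \<longlonglongrightarrow> 0" using T by simp
      qed
      show "AE e in \<mu>. norm (min \<bar>D j e\<bar> T) \<le> T" for j using T by auto
    qed auto
    then show ?thesis by simp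
  qed
  have est: "\<bar>(\<integral>e. q j e \<partial>\<mu>) - (\<integral>e. \<phi> e \<partial>\<mu>)\<bar> \<le> (\<integral>e. min \<bar>D j e\<bar> T \<partial>\<mu>) + 4 * K / T"
    if T: "0 < T" for T j
  proof -
    have mi: "integrable \<mu> (\<lambda>e. min \<bar>D j e\<bar> T)"
      by (rule integrable_const_bound[where B=T]) (use T in auto)
    have bi: "integrable \<mu> (\<lambda>e. min \<bar>D j e\<bar> T + (D j e)\<^sup>2 / T)"
      using mi D2i by simp
    have "(\<integral>e. q j e \<partial>\<mu>) - (\<integral>e. \<phi> e \<partial>\<mu>) = (\<integral>e. D j e \<partial>\<mu>)"
      unfolding D_def using qi \<phi>i by simp
    moreover have Di: "integrable \<mu> (D j)" unfolding D_def using qi \<phi>i by simp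
    moreover have "\<bar>\<integral>e. D j e \<partial>\<mu>\<bar> \<le> (\<integral>e. min \<bar>D j e\<bar> T + (D j e)\<^sup>2 / T \<partial>\<mu>)"
      by (rule order_trans[OF integral_abs_bound integral_mono]) (use Di bi trunc_ineq[OF T] in auto)
    ultimately have "\<bar>(\<integral>e. q j e \<partial>\<mu>) - (\<integral>e. \<phi> e \<partial>\<mu>)\<bar> \<le> (\<integral>e. min \<bar>D j e\<bar> T + (D j e)\<^sup>2 / T \<partial>\<mu>)"
      by simp
    also have "\<dots> = (\<integral>e. min \<bar>D j e\<bar> T \<partial>\<mu>) + (\<integral>e. (D j e)\<^sup>2 \<partial>\<mu>) / T"
      using mi D2i by simp
    also have "\<dots> \<le> (\<integral>e. min \<bar>D j e\<bar> T \<partial>\<mu>) + 4 * K / T"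
      using D2b[of j] T by (simp add: divide_right_mono)
    finally show ?thesis .
  qed
  have lim2: "(\<lambda>j. \<integral>e. q j e \<partial>\<mu>) \<longlonglongrightarrow> (\<integral>e. \<phi> e \<partial>\<mu>)"
  proof (rule metric_LIMSEQ_I)
    fix r :: real assume r: "0 < r"
    define T where "T = 8 * K / r + 1"
    have T: "0 < T" unfolding T_def using K r by (simp add: add_nonneg_pos)
    have KT: "4 * K / T \<le> r / 2"
    proof -
      have "8 * K \<le> r * T" unfolding T_def using r by (simp add: field_simps)
      then show ?thesis using T by (simp add: field_simps)
    qed
    have "r / 2 > 0" using r by simp
    from metric_LIMSEQ_D[OF mlim[OF T] this] obtain N where
      N: "\<And>j. j \<ge> N \<Longrightarrow> dist (\<integral>e. min \<bar>D j e\<bar> T \<partial>\<mu>) 0 < r / 2" by blast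
    show "\<exists>no. \<forall>n\<ge>no. dist (\<integral>e. q n e \<partial>\<mu>) (\<integral>e. \<phi> e \<partial>\<mu>) < r"
    proof (intro exI allI impI)
      fix j assume "N \<le> j"
      then have "(\<integral>e. min \<bar>D j e\<bar> T \<partial>\<mu>) < r / 2" using N[of j] by (simp add: dist_real_def)
      then show "dist (\<integral>e. q j e \<partial>\<mu>) (\<integral>e. \<phi> e \<partial>\<mu>) < r"
        using est[OF T, of j] KT by (simp add: dist_real_def)
    qed
  qed
  show "(\<integral>e. DG x e \<bullet> u \<partial>\<mu>) = Dg x \<bullet> u"
    using LIMSEQ_unique[OF lim2 lim1] unfolding \<phi>_def .
qed

end

lemma aux_w1: fixes w e Y :: real shows "0 < w \<Longrightarrow> e / w * (Y / 2) = (e * Y / (2 * w\<^sup>2)) * w"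
  by (simp add: power2_eq_square field_simps)

lemma aux_w2: fixes w c \<epsilon> \<kappa> :: real shows "0 < w \<Longrightarrow> c / 2 * (\<epsilon> / w)\<^sup>2 + \<kappa> * \<epsilon>\<^sup>2 / w = \<epsilon>\<^sup>2 * (c / (2 * w\<^sup>2) + \<kappa> / w)"
  by (simp add: power2_eq_square field_simps)

lemma arith_core:
  fixes \<alpha> \<epsilon> e1 c M \<beta> \<eta> \<kappa> gz g\<theta> nD2 nv2 S GzD A1 A2 A3 C :: real
  assumes a: "0 \<le> \<alpha>" "\<alpha> < 1" "0 < \<epsilon>" "\<epsilon> \<le> e1" "0 < c" "0 \<le> M"
    and defs: "\<beta> = \<alpha> / (1 - \<alpha>)" "\<eta> = \<epsilon> / (1 - \<alpha>)"
      "\<kappa> = e1 * c\<^sup>2 * \<beta>\<^sup>2 / (2 * (1 - \<alpha>)\<^sup>2) + 1"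
      "A1 = (1 + c) * (1 + \<beta>\<^sup>2)" "A2 = (4 * c + 2 * M) * A1 + 2 * M"
      "A3 = c / (2 * (1 - \<alpha>)\<^sup>2) + \<kappa> / (1 - \<alpha>)" "C = A3 * A2"
    and nn: "0 \<le> gz" "0 \<le> g\<theta>" "0 \<le> nD2" "0 \<le> nv2" "0 \<le> S"
    and h1: "nD2 / 2 - c\<^sup>2 * \<beta>\<^sup>2 / 2 * nv2 \<le> GzD"
    and h3: "S \<le> 2 * nD2 + 2 * (M * (1 + g\<theta>))"
    and h4: "nD2 \<le> 2 * c * g\<theta>"
    and h5: "g\<theta> \<le> A1 * (gz + nv2)"
  shows "2 * (gz - \<eta> * GzD + (c / 2 * \<eta>\<^sup>2 + \<kappa> * \<epsilon>\<^sup>2 / (1 - \<alpha>)) * S + \<kappa> * \<alpha> * nv2) + \<epsilon> * nD2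
     \<le> (1 + C * \<epsilon>\<^sup>2) * (2 * (gz + \<kappa> * nv2)) + 2 * C * \<epsilon>\<^sup>2"
proof -
  have oma: "0 < 1 - \<alpha>" using a by simp
  have \<beta>0: "0 \<le> \<beta>" using a defs by simp
  have \<eta>0: "0 \<le> \<eta>" using a defs by simp
  have \<kappa>1: "1 \<le> \<kappa>" using defs a \<beta>0 by simp
  have A10: "0 \<le> A1" using defs a by simp
  have A20: "0 \<le> A2" using defs a A10 by simp
  have A30: "0 \<le> A3" using defs a \<kappa>1 by simp
  have s1: "\<eta> * GzD \<ge> \<eta> * (nD2 / 2) - \<eta> * (c\<^sup>2 * \<beta>\<^sup>2 / 2) * nv2"
    using mult_left_mono[OF h1 \<eta>0] by (simp add: algebra_simps)
  have s2a: "\<eta> \<le> e1 / (1 - \<alpha>)" using a defs oma by (simp add: divide_right_mono)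
  have s2b: "\<eta> * (c\<^sup>2 * \<beta>\<^sup>2 / 2) \<le> e1 / (1 - \<alpha>) * (c\<^sup>2 * \<beta>\<^sup>2 / 2)"
    by (rule mult_right_mono[OF s2a]) simp
  have s2c: "e1 / (1 - \<alpha>) * (c\<^sup>2 * \<beta>\<^sup>2 / 2) = (\<kappa> - 1) * (1 - \<alpha>)"
    unfolding aux_w1[OF oma, of e1 "c\<^sup>2 * \<beta>\<^sup>2"] defs(3) by (simp add: algebra_simps)
  have s2e: "(\<kappa> - 1) * (1 - \<alpha>) = \<kappa> * (1 - \<alpha>) - (1 - \<alpha>)" by (simp add: algebra_simps)
  have s2d: "\<eta> * (c\<^sup>2 * \<beta>\<^sup>2 / 2) \<le> \<kappa> * (1 - \<alpha>)" using s2b s2c s2e oma by linarith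
  have s2: "\<eta> * (c\<^sup>2 * \<beta>\<^sup>2 / 2) * nv2 \<le> \<kappa> * (1 - \<alpha>) * nv2"
    by (rule mult_right_mono[OF s2d nn(4)])
  have s3a: "\<epsilon> * (1 - \<alpha>) \<le> \<epsilon>" using a by (simp add: algebra_simps)
  have s3: "\<epsilon> \<le> \<eta>"
    unfolding defs(2) using oma s3a by (simp add: le_divide_eq)
  have s3': "\<epsilon> * nD2 \<le> \<eta> * nD2" using s3 nn by (simp add: mult_right_mono)
  have s4: "c / 2 * \<eta>\<^sup>2 + \<kappa> * \<epsilon>\<^sup>2 / (1 - \<alpha>) = \<epsilon>\<^sup>2 * A3"
    unfolding defs(2) defs(6) by (rule aux_w2[OF oma])
  have s5a: "S \<le> (4 * c + 2 * M) * g\<theta> + 2 * M" using h3 h4 by (simp add: algebra_simps)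
  have s5b: "(4 * c + 2 * M) * g\<theta> \<le> (4 * c + 2 * M) * (A1 * (gz + nv2))"
    using h5 a by (intro mult_left_mono) auto
  have s5c: "(4 * c + 2 * M) * (A1 * (gz + nv2)) + 2 * M \<le> A2 * (1 + gz + nv2)"
    using defs A10 nn a by (simp add: algebra_simps)
  have s6: "A2 * (1 + gz + nv2) \<le> A2 * (1 + gz + \<kappa> * nv2)"
    using A20 \<kappa>1 nn by (intro mult_left_mono) (auto simp: mult_le_cancel_right1)
  have s5: "S \<le> A2 * (1 + gz + \<kappa> * nv2)" using s5a s5b s5c s6 by linarith
  have s7: "\<epsilon>\<^sup>2 * A3 * S \<le> \<epsilon>\<^sup>2 * A3 * (A2 * (1 + gz + \<kappa> * nv2))"
    using s5 A30 by (intro mult_left_mono) auto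
  have s7': "\<epsilon>\<^sup>2 * A3 * (A2 * (1 + gz + \<kappa> * nv2)) = C * \<epsilon>\<^sup>2 * (1 + gz + \<kappa> * nv2)"
    unfolding defs(7) by (simp add: algebra_simps)
  have lhs: "2 * (gz - \<eta> * GzD + (c / 2 * \<eta>\<^sup>2 + \<kappa> * \<epsilon>\<^sup>2 / (1 - \<alpha>)) * S + \<kappa> * \<alpha> * nv2) + \<epsilon> * nD2
     = 2 * gz - 2 * (\<eta> * GzD) + 2 * (\<epsilon>\<^sup>2 * A3 * S) + 2 * (\<kappa> * \<alpha> * nv2) + \<epsilon> * nD2"
    by (simp only: s4) (simp add: algebra_simps)
  have rhs: "(1 + C * \<epsilon>\<^sup>2) * (2 * (gz + \<kappa> * nv2)) + 2 * C * \<epsilon>\<^sup>2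
     = 2 * gz + 2 * (\<kappa> * (1 - \<alpha>) * nv2) + 2 * (\<kappa> * \<alpha> * nv2) + 2 * (C * \<epsilon>\<^sup>2 * (1 + gz + \<kappa> * nv2))"
    by (simp add: algebra_simps)
  show ?thesis unfolding lhs rhs using s1 s2 s3' s7 s7' by (simp add: algebra_simps)
qed


lemma convex_sq:
  fixes a b \<alpha> \<epsilon> :: real
  assumes "0 \<le> \<alpha>" "\<alpha> < 1"
  shows "(\<alpha> * a + \<epsilon> * b)\<^sup>2 \<le> \<alpha> * a\<^sup>2 + \<epsilon>\<^sup>2 / (1 - \<alpha>) * b\<^sup>2"
proof -
  define w where "w = 1 - \<alpha>"
  have w: "0 < w" using assms by (simp add: w_def)
  define t where "t = \<epsilon> * b / w"
  have e1: "\<alpha> * a + \<epsilon> * b = \<alpha> * a + w * t" using w by (simp add: t_def)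
  have e2: "\<epsilon>\<^sup>2 / w * b\<^sup>2 = w * t\<^sup>2" using w by (simp add: t_def power2_eq_square field_simps)
  have al: "\<alpha> = 1 - w" by (simp add: w_def)
  have "(\<alpha> * a + w * t)\<^sup>2 \<le> \<alpha> * a\<^sup>2 + w * t\<^sup>2"
  proof -
    have "\<alpha> * a\<^sup>2 + w * t\<^sup>2 - (\<alpha> * a + w * t)\<^sup>2 = \<alpha> * w * (a - t)\<^sup>2"
      unfolding al by (simp add: power2_eq_square algebra_simps)
    moreover have "0 \<le> \<alpha> * w * (a - t)\<^sup>2" using assms w by simp
    ultimately show ?thesis by linarith
  qed
  then show ?thesis unfolding e1 using e2 by (simp add: w_def)
qed

lemma norm_convex_sq:
  fixes v d :: "'a::real_normed_vector" and \<alpha> \<epsilon> :: real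
  assumes "0 \<le> \<alpha>" "\<alpha> < 1" "0 \<le> \<epsilon>"
  shows "(norm (\<alpha> *\<^sub>R v + \<epsilon> *\<^sub>R d))\<^sup>2 \<le> \<alpha> * (norm v)\<^sup>2 + \<epsilon>\<^sup>2 / (1 - \<alpha>) * (norm d)\<^sup>2"
proof -
  have "norm (\<alpha> *\<^sub>R v + \<epsilon> *\<^sub>R d) \<le> \<alpha> * norm v + \<epsilon> * norm d"
    using norm_triangle_ineq[of "\<alpha> *\<^sub>R v" "\<epsilon> *\<^sub>R d"] assms by simp
  then have "(norm (\<alpha> *\<^sub>R v + \<epsilon> *\<^sub>R d))\<^sup>2 \<le> (\<alpha> * norm v + \<epsilon> * norm d)\<^sup>2"
    by (intro power_mono) auto
  also have "\<dots> \<le> \<alpha> * (norm v)\<^sup>2 + \<epsilon>\<^sup>2 / (1 - \<alpha>) * (norm d)\<^sup>2"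
    by (rule convex_sq[OF assms(1,2)])
  finally show ?thesis .
qed

locale kern = unb +
  fixes \<alpha> e1 :: real
  assumes alpha0: "0 \<le> \<alpha>" and alpha1: "\<alpha> < 1" and e1pos: "0 < e1" and cpos: "0 < c"
begin

definition "bet = \<alpha> / (1 - \<alpha>)"
definition "kap = e1 * c\<^sup>2 * bet\<^sup>2 / (2 * (1 - \<alpha>)\<^sup>2) + 1"
definition "AA1 = (1 + c) * (1 + bet\<^sup>2)"
definition "AA2 = (4 * c + 2 * M) * AA1 + 2 * M"
definition "AA3 = c / (2 * (1 - \<alpha>)\<^sup>2) + kap / (1 - \<alpha>)"
definition "CC = AA3 * AA2"
definition "Phi \<theta> v = 2 * (g (\<theta> - bet *\<^sub>R v) + kap * (norm v)\<^sup>2)"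

lemma bet0: "0 \<le> bet" using alpha0 alpha1 by (simp add: bet_def)
lemma kap1: "1 \<le> kap" using e1pos by (simp add: kap_def)

lemma Phi_nonneg: "0 \<le> Phi \<theta> v"
  using gnn kap1 by (simp add: Phi_def)

lemma g_cont: "continuous_on UNIV g"
  using gd by (meson continuous_at_imp_continuous_on has_derivative_continuous)

lemma g_meas[measurable]: "g \<in> borel_measurable borel"
  by (rule borel_measurable_continuous_onI[OF g_cont])

lemma grad_bound: "(norm (Dg y))\<^sup>2 \<le> 2 * c * g y"
proof -
  let ?y = "y - (1 / c) *\<^sub>R Dg y"
  have "g ?y \<le> g y + Dg y \<bullet> (?y - y) + c / 2 * (norm (?y - y))\<^sup>2"
    by (rule descent[OF gd lip])
  also have "Dg y \<bullet> (?y - y) = - (norm (Dg y))\<^sup>2 / c"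
    by (simp add: power2_norm_eq_inner)
  also have "c / 2 * (norm (?y - y))\<^sup>2 = (norm (Dg y))\<^sup>2 / (2 * c)"
    using cpos by (simp add: power2_eq_square)
  finally have "0 \<le> g y - (norm (Dg y))\<^sup>2 / (2 * c)" using gnn[of ?y] by simp
  then show ?thesis using cpos by (simp add: field_simps)
qed

end


context kern
begin

lemma kernel:
  assumes eps: "0 < \<epsilon>" "\<epsilon> \<le> e1"
  shows "(\<integral>\<^sup>+e. ennreal (Phi (\<theta> - (\<alpha> *\<^sub>R v + \<epsilon> *\<^sub>R DG \<theta> e)) (\<alpha> *\<^sub>R v + \<epsilon> *\<^sub>R DG \<theta> e)) \<partial>\<mu>)
          + ennreal (\<epsilon> * (norm (Dg \<theta>))\<^sup>2)
       \<le> ennreal ((1 + CC * \<epsilon>\<^sup>2) * Phi \<theta> v + 2 * CC * \<epsilon>\<^sup>2)"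
proof -
  interpret prob_space \<mu> by (rule prob)
  have oma: "0 < 1 - \<alpha>" using alpha1 by simp
  define z where "z = \<theta> - bet *\<^sub>R v"
  define \<eta> where "\<eta> = \<epsilon> / (1 - \<alpha>)"
  define D where "D = Dg \<theta>"
  define U where "U e = 2 * (g z - \<eta> * (DG \<theta> e \<bullet> Dg z) + c / 2 * \<eta>\<^sup>2 * (norm (DG \<theta> e))\<^sup>2
      + kap * (\<alpha> * (norm v)\<^sup>2 + \<epsilon>\<^sup>2 / (1 - \<alpha>) * (norm (DG \<theta> e))\<^sup>2))" for e
  let ?v' = "\<lambda>e. \<alpha> *\<^sub>R v + \<epsilon> *\<^sub>R DG \<theta> e"
  have sc1: "(1 + bet) * \<alpha> = bet" and sc2: "(1 + bet) * \<epsilon> = \<eta>"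
    using oma by (simp_all add: bet_def \<eta>_def field_simps)
  have p1: "Phi (\<theta> - ?v' e) (?v' e) \<le> U e" for e
  proof -
    have zz: "\<theta> - ?v' e - bet *\<^sub>R ?v' e = z - \<eta> *\<^sub>R DG \<theta> e"
    proof -
      have "\<theta> - ?v' e - bet *\<^sub>R ?v' e = \<theta> - ((1 + bet) * \<alpha>) *\<^sub>R v - ((1 + bet) * \<epsilon>) *\<^sub>R DG \<theta> e"
        by (simp add: algebra_simps scaleR_add_right)
      then show ?thesis unfolding sc1 sc2 z_def by simp
    qed
    have "g (z - \<eta> *\<^sub>R DG \<theta> e) \<le> g z + Dg z \<bullet> (z - \<eta> *\<^sub>R DG \<theta> e - z) + c / 2 * (norm (z - \<eta> *\<^sub>R DG \<theta> e - z))\<^sup>2"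
      by (rule descent[OF gd lip])
    also have "\<dots> = g z - \<eta> * (DG \<theta> e \<bullet> Dg z) + c / 2 * \<eta>\<^sup>2 * (norm (DG \<theta> e))\<^sup>2"
      by (simp add: inner_commute power_mult_distrib)
    finally have a: "g (z - \<eta> *\<^sub>R DG \<theta> e) \<le> g z - \<eta> * (DG \<theta> e \<bullet> Dg z) + c / 2 * \<eta>\<^sup>2 * (norm (DG \<theta> e))\<^sup>2" .
    have b: "(norm (?v' e))\<^sup>2 \<le> \<alpha> * (norm v)\<^sup>2 + \<epsilon>\<^sup>2 / (1 - \<alpha>) * (norm (DG \<theta> e))\<^sup>2"
      by (rule norm_convex_sq) (use alpha0 alpha1 eps in auto)
    have b': "kap * (norm (?v' e))\<^sup>2 \<le> kap * (\<alpha> * (norm v)\<^sup>2 + \<epsilon>\<^sup>2 / (1 - \<alpha>) * (norm (DG \<theta> e))\<^sup>2)"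
      using b kap1 by (intro mult_left_mono) auto
    show ?thesis unfolding Phi_def U_def zz using a b' by simp
  qed
  have U0: "0 \<le> U e" for e using p1[of e] Phi_nonneg[of "\<theta> - ?v' e" "?v' e"] by simp
  have S2n: "(\<integral>\<^sup>+ e. ennreal ((norm (DG \<theta> e))\<^sup>2) \<partial>\<mu>) \<le> ennreal (2 * (norm (Dg \<theta>))\<^sup>2 + 2 * (M * (1 + g \<theta>)))"
    by (rule second_moment)
  have Sb0: "0 \<le> 2 * (norm (Dg \<theta>))\<^sup>2 + 2 * (M * (1 + g \<theta>))" using M0 gnn[of \<theta>] by simp
  have Si: "integrable \<mu> (\<lambda>e. (norm (DG \<theta> e))\<^sup>2)"
    and Sb: "(\<integral>e. (norm (DG \<theta> e))\<^sup>2 \<partial>\<mu>) \<le> 2 * (norm (Dg \<theta>))\<^sup>2 + 2 * (M * (1 + g \<theta>))"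
    using nn_bound_integrable[OF _ _ S2n Sb0] by auto
  have Ii: "integrable \<mu> (\<lambda>e. DG \<theta> e \<bullet> Dg z)" and Ie: "(\<integral>e. DG \<theta> e \<bullet> Dg z \<partial>\<mu>) = Dg \<theta> \<bullet> Dg z"
    using unbiased[of \<theta> "Dg z"] by auto
  define S where "S = (\<integral>e. (norm (DG \<theta> e))\<^sup>2 \<partial>\<mu>)"
  have Ui: "integrable \<mu> U" unfolding U_def using Si Ii by simp
  have UI: "(\<integral>e. U e \<partial>\<mu>) = 2 * (g z - \<eta> * (Dg \<theta> \<bullet> Dg z) + c / 2 * \<eta>\<^sup>2 * S + kap * (\<alpha> * (norm v)\<^sup>2 + \<epsilon>\<^sup>2 / (1 - \<alpha>) * S))"
    unfolding U_def S_def using Si Ii Ie by (simp add: prob_space)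
  have h1: "(norm D)\<^sup>2 / 2 - c\<^sup>2 * bet\<^sup>2 / 2 * (norm v)\<^sup>2 \<le> D \<bullet> Dg z"
  proof -
    have nz: "norm (Dg z - D) \<le> c * bet * norm v"
      using lip[of z \<theta>] bet0 by (simp add: z_def D_def)
    have "D \<bullet> Dg z = D \<bullet> D + D \<bullet> (Dg z - D)" by (simp add: inner_diff_right)
    moreover have "- (norm D * norm (Dg z - D)) \<le> D \<bullet> (Dg z - D)"
      using Cauchy_Schwarz_ineq2[of D "Dg z - D"] by linarith
    moreover have "norm D * norm (Dg z - D) \<le> norm D * (c * bet * norm v)"
      using nz by (intro mult_left_mono) auto
    moreover have "norm D * (c * bet * norm v) \<le> (norm D)\<^sup>2 / 2 + c\<^sup>2 * bet\<^sup>2 / 2 * (norm v)\<^sup>2"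
    proof -
      have "0 \<le> (norm D - c * bet * norm v)\<^sup>2" by simp
      then show ?thesis by (simp add: power2_eq_square algebra_simps)
    qed
    moreover have "D \<bullet> D = (norm D)\<^sup>2" by (simp add: power2_norm_eq_inner)
    ultimately show ?thesis by linarith
  qed
  have h5: "g \<theta> \<le> AA1 * (g z + (norm v)\<^sup>2)"
  proof -
    have th: "\<theta> = z + bet *\<^sub>R v" by (simp add: z_def)
    have "g \<theta> \<le> g z + Dg z \<bullet> (\<theta> - z) + c / 2 * (norm (\<theta> - z))\<^sup>2"
      by (rule descent[OF gd lip])
    also have "\<theta> - z = bet *\<^sub>R v" by (simp add: z_def)
    finally have g1: "g \<theta> \<le> g z + Dg z \<bullet> (bet *\<^sub>R v) + c / 2 * (bet\<^sup>2 * (norm v)\<^sup>2)"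
      using bet0 by (simp add: power_mult_distrib)
    have "Dg z \<bullet> (bet *\<^sub>R v) \<le> norm (Dg z) * (bet * norm v)"
      using norm_cauchy_schwarz[of "Dg z" "bet *\<^sub>R v"] bet0 by simp
    also have "\<dots> \<le> (norm (Dg z))\<^sup>2 / 2 + bet\<^sup>2 * (norm v)\<^sup>2 / 2"
    proof -
      have "0 \<le> (norm (Dg z) - bet * norm v)\<^sup>2" by simp
      then show ?thesis by (simp add: power2_eq_square algebra_simps)
    qed
    finally have g3: "Dg z \<bullet> (bet *\<^sub>R v) \<le> (norm (Dg z))\<^sup>2 / 2 + bet\<^sup>2 * (norm v)\<^sup>2 / 2" .
    have g4: "(norm (Dg z))\<^sup>2 / 2 \<le> c * g z" using grad_bound[of z] by simp
    have "g \<theta> \<le> g z + (c * g z + bet\<^sup>2 * (norm v)\<^sup>2 / 2) + c / 2 * (bet\<^sup>2 * (norm v)\<^sup>2)"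
      using g1 g3 g4 by linarith
    also have "\<dots> = (1 + c) * g z + (1 + c) * (bet\<^sup>2 * (norm v)\<^sup>2) / 2"
      by (simp add: field_simps)
    finally have g2: "g \<theta> \<le> (1 + c) * g z + (1 + c) * (bet\<^sup>2 * (norm v)\<^sup>2) / 2" .
    have q1: "(1 + c) * g z \<le> AA1 * g z"
      unfolding AA1_def using cpos gnn[of z] by (intro mult_right_mono) (auto simp: mult_le_cancel_left1)
    have q2: "(1 + c) * (bet\<^sup>2 * (norm v)\<^sup>2) / 2 \<le> AA1 * (norm v)\<^sup>2"
    proof -
      have "(1 + c) * (bet\<^sup>2 / 2) \<le> (1 + c) * (1 + bet\<^sup>2)"
        using cpos by (intro mult_left_mono) auto
      then have "(1 + c) * (bet\<^sup>2 / 2) * (norm v)\<^sup>2 \<le> (1 + c) * (1 + bet\<^sup>2) * (norm v)\<^sup>2"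
        by (intro mult_right_mono) auto
      moreover have "(1 + c) * (bet\<^sup>2 * (norm v)\<^sup>2) / 2 = (1 + c) * (bet\<^sup>2 / 2) * (norm v)\<^sup>2"
        by (simp add: field_simps)
      ultimately show ?thesis unfolding AA1_def by simp
    qed
    show ?thesis using g2 q1 q2 by (simp add: distrib_left)
  qed
  have S0: "0 \<le> S" unfolding S_def by simp
  have h3: "S \<le> 2 * (norm D)\<^sup>2 + 2 * (M * (1 + g \<theta>))" using Sb by (simp add: S_def D_def)
  have h4: "(norm D)\<^sup>2 \<le> 2 * c * g \<theta>" unfolding D_def by (rule grad_bound)
  have core: "2 * (g z - \<eta> * (D \<bullet> Dg z) + (c / 2 * \<eta>\<^sup>2 + kap * \<epsilon>\<^sup>2 / (1 - \<alpha>)) * S + kap * \<alpha> * (norm v)\<^sup>2) + \<epsilon> * (norm D)\<^sup>2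
     \<le> (1 + CC * \<epsilon>\<^sup>2) * (2 * (g z + kap * (norm v)\<^sup>2)) + 2 * CC * \<epsilon>\<^sup>2"
    by (rule arith_core[OF alpha0 alpha1 eps cpos M0 bet_def \<eta>_def kap_def AA1_def AA2_def AA3_def CC_def
          gnn gnn zero_le_power2 zero_le_power2 S0 h1 h3 h4 h5])
  have eqU: "(\<integral>e. U e \<partial>\<mu>) + \<epsilon> * (norm (Dg \<theta>))\<^sup>2 =
      2 * (g z - \<eta> * (D \<bullet> Dg z) + (c / 2 * \<eta>\<^sup>2 + kap * \<epsilon>\<^sup>2 / (1 - \<alpha>)) * S + kap * \<alpha> * (norm v)\<^sup>2) + \<epsilon> * (norm D)\<^sup>2"
    unfolding UI D_def by (simp add: algebra_simps)
  have PhiE: "Phi \<theta> v = 2 * (g z + kap * (norm v)\<^sup>2)" by (simp add: Phi_def z_def)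
  have "(\<integral>\<^sup>+e. ennreal (Phi (\<theta> - ?v' e) (?v' e)) \<partial>\<mu>) \<le> (\<integral>\<^sup>+e. ennreal (U e) \<partial>\<mu>)"
    by (intro nn_integral_mono ennreal_leI p1)
  also have "\<dots> = ennreal (\<integral>e. U e \<partial>\<mu>)"
    by (rule nn_integral_eq_integral[OF Ui]) (simp add: U0)
  finally have "(\<integral>\<^sup>+e. ennreal (Phi (\<theta> - ?v' e) (?v' e)) \<partial>\<mu>) + ennreal (\<epsilon> * (norm (Dg \<theta>))\<^sup>2)
      \<le> ennreal (\<integral>e. U e \<partial>\<mu>) + ennreal (\<epsilon> * (norm (Dg \<theta>))\<^sup>2)"
    by (rule add_right_mono)
  also have "\<dots> = ennreal ((\<integral>e. U e \<partial>\<mu>) + \<epsilon> * (norm (Dg \<theta>))\<^sup>2)"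
    using eps U0 by (simp add: ennreal_plus integral_nonneg)
  also have "\<dots> \<le> ennreal ((1 + CC * \<epsilon>\<^sup>2) * Phi \<theta> v + 2 * CC * \<epsilon>\<^sup>2)"
    unfolding eqU PhiE by (rule ennreal_leI[OF core])
  finally show ?thesis .
qed

end


lemma st_Suc:
  "sgdm_state \<alpha> \<epsilon> DG \<xi> \<theta>1 v0 (Suc k) \<omega> =
    (fst (sgdm_state \<alpha> \<epsilon> DG \<xi> \<theta>1 v0 k \<omega>) -
       (\<alpha> *\<^sub>R snd (sgdm_state \<alpha> \<epsilon> DG \<xi> \<theta>1 v0 k \<omega>) + \<epsilon> (Suc k) *\<^sub>R DG (fst (sgdm_state \<alpha> \<epsilon> DG \<xi> \<theta>1 v0 k \<omega>)) (\<xi> (Suc k) \<omega>)),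
     \<alpha> *\<^sub>R snd (sgdm_state \<alpha> \<epsilon> DG \<xi> \<theta>1 v0 k \<omega>) + \<epsilon> (Suc k) *\<^sub>R DG (fst (sgdm_state \<alpha> \<epsilon> DG \<xi> \<theta>1 v0 k \<omega>)) (\<xi> (Suc k) \<omega>))"
  by (simp add: Let_def split: prod.split)

lemma st_restrict:
  "k \<le> K \<Longrightarrow> sgdm_state \<alpha> \<epsilon> DG \<xi> \<theta>1 v0 k \<omega> =
     sgdm_state \<alpha> \<epsilon> DG (\<lambda>i f. f i) \<theta>1 v0 k (restrict (\<lambda>i. \<xi> i \<omega>) {1..K})"
proof (induction k)
  case 0 then show ?case by simp
next
  case (Suc k)
  have IH: "sgdm_state \<alpha> \<epsilon> DG \<xi> \<theta>1 v0 k \<omega> =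
     sgdm_state \<alpha> \<epsilon> DG (\<lambda>i f. f i) \<theta>1 v0 k (restrict (\<lambda>i. \<xi> i \<omega>) {1..K})"
    by (rule Suc.IH[OF Suc_leD[OF Suc.prems]])
  have R: "restrict (\<lambda>i. \<xi> i \<omega>) {1..K} (Suc k) = \<xi> (Suc k) \<omega>" using Suc.prems by simp
  show ?case by (simp only: st_Suc IH R)
qed

lemma st_meas:
  fixes DG :: "'a::euclidean_space \<Rightarrow> 'b \<Rightarrow> 'a"
  assumes DGm: "(\<lambda>(x, e). DG x e) \<in> borel_measurable (borel \<Otimes>\<^sub>M E)"
  shows "k \<le> K \<Longrightarrow> (\<lambda>f. fst (sgdm_state \<alpha> \<epsilon> DG (\<lambda>i f. f i) \<theta>1 v0 k f)) \<in> borel_measurable (PiM {1..K} (\<lambda>_. E))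
        \<and> (\<lambda>f. snd (sgdm_state \<alpha> \<epsilon> DG (\<lambda>i f. f i) \<theta>1 v0 k f)) \<in> borel_measurable (PiM {1..K} (\<lambda>_. E))"
proof (induction k)
  case 0 then show ?case by simp
next
  case (Suc k)
  then have IH: "(\<lambda>f. fst (sgdm_state \<alpha> \<epsilon> DG (\<lambda>i f. f i) \<theta>1 v0 k f)) \<in> borel_measurable (PiM {1..K} (\<lambda>_. E))"
     "(\<lambda>f. snd (sgdm_state \<alpha> \<epsilon> DG (\<lambda>i f. f i) \<theta>1 v0 k f)) \<in> borel_measurable (PiM {1..K} (\<lambda>_. E))"
    by auto
  have comp: "(\<lambda>f. f (Suc k)) \<in> measurable (PiM {1..K} (\<lambda>_. E)) E"
    using Suc.prems by (intro measurable_component_singleton) auto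
  have dgm: "(\<lambda>f. DG (fst (sgdm_state \<alpha> \<epsilon> DG (\<lambda>i f. f i) \<theta>1 v0 k f)) (f (Suc k))) \<in> borel_measurable (PiM {1..K} (\<lambda>_. E))"
    by (rule measurable_Pair_compose_split[OF DGm IH(1) comp])
  show ?case unfolding st_Suc using IH dgm by simp
qed

lemma indep_nn_integral:
  assumes P: "prob_space P" and ind: "prob_space.indep_var P M1 X M2 Y"
    and h: "h \<in> borel_measurable (M1 \<Otimes>\<^sub>M M2)"
  shows "(\<integral>\<^sup>+\<omega>. h (X \<omega>, Y \<omega>) \<partial>P) = (\<integral>\<^sup>+\<omega>. (\<integral>\<^sup>+y. h (X \<omega>, y) \<partial>distr P M2 Y) \<partial>P)"
    and "(\<lambda>\<omega>. \<integral>\<^sup>+y. h (X \<omega>, y) \<partial>distr P M2 Y) \<in> borel_measurable P"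
proof -
  interpret prob_space P by (rule P)
  have X: "X \<in> measurable P M1" and Y: "Y \<in> measurable P M2"
    using indep_var_rv1[OF ind] indep_var_rv2[OF ind] by auto
  have eq: "distr P M1 X \<Otimes>\<^sub>M distr P M2 Y = distr P (M1 \<Otimes>\<^sub>M M2) (\<lambda>x. (X x, Y x))"
    using ind indep_var_distribution_eq by blast
  interpret Y: prob_space "distr P M2 Y" by (rule prob_space_distr[OF Y])
  interpret XX: prob_space "distr P M1 X" by (rule prob_space_distr[OF X])
  have h': "h \<in> borel_measurable (distr P M1 X \<Otimes>\<^sub>M distr P M2 Y)"
  proof -
    have "sets (distr P M1 X \<Otimes>\<^sub>M distr P M2 Y) = sets (M1 \<Otimes>\<^sub>M M2)"
      by (rule sets_pair_measure_cong) simp_all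
    then show ?thesis using h by (subst measurable_cong_sets[OF _ refl]) auto
  qed
  have inner: "(\<lambda>x. \<integral>\<^sup>+y. h (x, y) \<partial>distr P M2 Y) \<in> borel_measurable M1"
  proof -
    have "(\<lambda>x. \<integral>\<^sup>+y. h (x, y) \<partial>distr P M2 Y) \<in> borel_measurable (distr P M1 X)"
      by (rule Y.borel_measurable_nn_integral_fst[OF h'])
    then show ?thesis by (subst measurable_cong_sets[OF sets_distr[symmetric] refl])
  qed
  show "(\<lambda>\<omega>. \<integral>\<^sup>+y. h (X \<omega>, y) \<partial>distr P M2 Y) \<in> borel_measurable P"
    using measurable_compose[OF X inner] by simp
  have "(\<integral>\<^sup>+\<omega>. h (X \<omega>, Y \<omega>) \<partial>P) = (\<integral>\<^sup>+p. h p \<partial>distr P (M1 \<Otimes>\<^sub>M M2) (\<lambda>x. (X x, Y x)))"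
    using X Y h by (subst nn_integral_distr) auto
  also have "\<dots> = (\<integral>\<^sup>+p. h p \<partial>(distr P M1 X \<Otimes>\<^sub>M distr P M2 Y))" by (simp add: eq)
  also have "\<dots> = (\<integral>\<^sup>+x. \<integral>\<^sup>+y. h (x, y) \<partial>distr P M2 Y \<partial>distr P M1 X)"
    by (rule Y.nn_integral_fst[OF h', symmetric])
  also have "\<dots> = (\<integral>\<^sup>+\<omega>. (\<integral>\<^sup>+y. h (X \<omega>, y) \<partial>distr P M2 Y) \<partial>P)"
    using X inner by (subst nn_integral_distr) auto
  finally show "(\<integral>\<^sup>+\<omega>. h (X \<omega>, Y \<omega>) \<partial>P) = (\<integral>\<^sup>+\<omega>. (\<integral>\<^sup>+y. h (X \<omega>, y) \<partial>distr P M2 Y) \<partial>P)" .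
qed

lemma indep_restrict_next:
  assumes P: "prob_space P"
    and ind: "prob_space.indep_vars P (\<lambda>_. E) \<xi> {1..}"
  shows "prob_space.indep_var P (PiM {1..k} (\<lambda>_. E)) (\<lambda>\<omega>. restrict (\<lambda>i. \<xi> i \<omega>) {1..k})
           (PiM {Suc k} (\<lambda>_. E)) (\<lambda>\<omega>. restrict (\<lambda>i. \<xi> i \<omega>) {Suc k})"
proof -
  interpret prob_space P by (rule P)
  show ?thesis by (rule indep_var_restrict[OF ind]) auto
qed


context kern
begin
lemma CC_nonneg: "0 \<le> CC"
proof -
  have "0 \<le> AA1" using cpos by (simp add: AA1_def)
  then have "0 \<le> AA2" using cpos M0 by (simp add: AA2_def)
  moreover have "0 \<le> AA3" using cpos kap1 alpha1 by (simp add: AA3_def)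
  ultimately show ?thesis by (simp add: CC_def)
qed

lemma Dg_meas[measurable]: "Dg \<in> borel_measurable borel"
proof -
  have "c-lipschitz_on UNIV Dg" by (rule lipschitz_onI) (use lip cpos in \<open>auto simp: dist_norm\<close>)
  then have "continuous_on UNIV Dg" by (rule lipschitz_on_continuous_on)
  then show ?thesis by (rule borel_measurable_continuous_onI)
qed
end

lemma st_meas_P:
  fixes DG :: "'a::euclidean_space \<Rightarrow> 'b \<Rightarrow> 'a"
  assumes DGm: "(\<lambda>(x, e). DG x e) \<in> borel_measurable (borel \<Otimes>\<^sub>M E)"
    and xm: "\<And>n. \<xi> n \<in> measurable P E"
  shows "(\<lambda>\<omega>. fst (sgdm_state \<alpha> \<epsilon> DG \<xi> \<theta>1 v0 k \<omega>)) \<in> borel_measurable P"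
    "(\<lambda>\<omega>. snd (sgdm_state \<alpha> \<epsilon> DG \<xi> \<theta>1 v0 k \<omega>)) \<in> borel_measurable P"
proof -
  have R: "(\<lambda>\<omega>. restrict (\<lambda>i. \<xi> i \<omega>) {1..k}) \<in> measurable P (PiM {1..k} (\<lambda>_. E))"
    using xm by (intro measurable_restrict) auto
  note sm = st_meas[OF DGm order_refl, of \<alpha> \<epsilon> \<theta>1 v0 k]
  have eq: "sgdm_state \<alpha> \<epsilon> DG \<xi> \<theta>1 v0 k \<omega> = sgdm_state \<alpha> \<epsilon> DG (\<lambda>i f. f i) \<theta>1 v0 k (restrict (\<lambda>i. \<xi> i \<omega>) {1..k})" for \<omega>
    by (rule st_restrict[OF order_refl])
  show "(\<lambda>\<omega>. fst (sgdm_state \<alpha> \<epsilon> DG \<xi> \<theta>1 v0 k \<omega>)) \<in> borel_measurable P"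
    unfolding eq by (rule measurable_compose[OF R conjunct1[OF sm]])
  show "(\<lambda>\<omega>. snd (sgdm_state \<alpha> \<epsilon> DG \<xi> \<theta>1 v0 k \<omega>)) \<in> borel_measurable P"
    unfolding eq by (rule measurable_compose[OF R conjunct2[OF sm]])
qed

lemma step_ineq:
  fixes DG :: "'a::euclidean_space \<Rightarrow> 'b \<Rightarrow> 'a"
  assumes P: "prob_space P"
    and xm: "\<And>n. \<xi> n \<in> measurable P E"
    and ind: "prob_space.indep_vars P (\<lambda>_. E) \<xi> {1..}"
    and DGmE: "(\<lambda>(x, e). DG x e) \<in> borel_measurable (borel \<Otimes>\<^sub>M E)"
    and K: "kern (distr P E (\<xi> (Suc k))) g Dg G DG c M \<alpha> e1"
    and eps: "0 < \<epsilon> (Suc k)" "\<epsilon> (Suc k) \<le> e1"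
  shows "(\<integral>\<^sup>+\<omega>. ennreal (kern.Phi g c \<alpha> e1 (fst (sgdm_state \<alpha> \<epsilon> DG \<xi> \<theta>1 v0 (Suc k) \<omega>)) (snd (sgdm_state \<alpha> \<epsilon> DG \<xi> \<theta>1 v0 (Suc k) \<omega>))) \<partial>P)
       + ennreal (\<epsilon> (Suc k)) * (\<integral>\<^sup>+\<omega>. ennreal ((norm (Dg (fst (sgdm_state \<alpha> \<epsilon> DG \<xi> \<theta>1 v0 k \<omega>))))\<^sup>2) \<partial>P)
     \<le> ennreal (1 + kern.CC c M \<alpha> e1 * (\<epsilon> (Suc k))\<^sup>2) * (\<integral>\<^sup>+\<omega>. ennreal (kern.Phi g c \<alpha> e1 (fst (sgdm_state \<alpha> \<epsilon> DG \<xi> \<theta>1 v0 k \<omega>)) (snd (sgdm_state \<alpha> \<epsilon> DG \<xi> \<theta>1 v0 k \<omega>))) \<partial>P)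
       + ennreal (2 * kern.CC c M \<alpha> e1 * (\<epsilon> (Suc k))\<^sup>2)"
proof -
  interpret prob_space P by (rule P)
  interpret kern "distr P E (\<xi> (Suc k))" g Dg G DG c M \<alpha> e1 by (rule K)
  let ?e = "\<epsilon> (Suc k)"
  let ?S = "\<lambda>k \<omega>. sgdm_state \<alpha> \<epsilon> DG \<xi> \<theta>1 v0 k \<omega>"
  let ?Sf = "\<lambda>f. sgdm_state \<alpha> \<epsilon> DG (\<lambda>i f. f i) \<theta>1 v0 k f"
  let ?R = "\<lambda>\<omega>. restrict (\<lambda>i. \<xi> i \<omega>) {1..k}"
  let ?R' = "\<lambda>\<omega>. restrict (\<lambda>i. \<xi> i \<omega>) {Suc k}"
  let ?M1 = "PiM {1..k} (\<lambda>_. E)"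
  let ?M2 = "PiM {Suc k} (\<lambda>_. E)"
  define H' where "H' f e = ennreal (Phi (fst (?Sf f) - (\<alpha> *\<^sub>R snd (?Sf f) + ?e *\<^sub>R DG (fst (?Sf f)) e))
        (\<alpha> *\<^sub>R snd (?Sf f) + ?e *\<^sub>R DG (fst (?Sf f)) e))" for f e
  define H where "H p = H' (fst p) (snd p (Suc k))" for p
  note sm = st_meas[OF DGmE order_refl, of \<alpha> \<epsilon> \<theta>1 v0 k]
  have sm1[measurable]: "(\<lambda>f. fst (?Sf f)) \<in> borel_measurable ?M1" using sm by simp
  have sm2[measurable]: "(\<lambda>f. snd (?Sf f)) \<in> borel_measurable ?M1" using sm by simp
  have DGm'[measurable]: "(\<lambda>(x, e). DG x e) \<in> borel_measurable (borel \<Otimes>\<^sub>M E)" by (rule DGmE)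
  have comp[measurable]: "(\<lambda>y. y (Suc k)) \<in> measurable ?M2 E"
    by (rule measurable_component_singleton) simp
  have Hm: "H \<in> borel_measurable (?M1 \<Otimes>\<^sub>M ?M2)"
    unfolding H_def H'_def Phi_def by measurable
  have indv: "indep_var ?M1 ?R ?M2 ?R'"
    by (rule indep_restrict_next[OF P ind])
  have rep: "?S k \<omega> = ?Sf (?R \<omega>)" for \<omega> by (rule st_restrict) simp
  have Suc_rep: "ennreal (Phi (fst (?S (Suc k) \<omega>)) (snd (?S (Suc k) \<omega>))) = H (?R \<omega>, ?R' \<omega>)" for \<omega>
    unfolding H_def H'_def st_Suc by (simp add: rep)
  have R'm: "?R' \<in> measurable P ?M2" using xm by (intro measurable_restrict) auto
  have distr_eq: "distr P E (\<xi> (Suc k)) = distr (distr P ?M2 ?R') E (\<lambda>y. y (Suc k))"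
    by (subst distr_distr[OF comp R'm]) (simp add: o_def)
  have H'm: "(\<lambda>e. H' x e) \<in> borel_measurable E" for x
    unfolding H'_def Phi_def by measurable
  have inner_eq: "(\<integral>\<^sup>+y. H (x, y) \<partial>distr P ?M2 ?R') = (\<integral>\<^sup>+e. H' x e \<partial>distr P E (\<xi> (Suc k)))" for x
    unfolding distr_eq H_def using H'm by (subst nn_integral_distr) (auto simp: comp)
  have A: "(\<integral>\<^sup>+\<omega>. ennreal (Phi (fst (?S (Suc k) \<omega>)) (snd (?S (Suc k) \<omega>))) \<partial>P)
      = (\<integral>\<^sup>+\<omega>. (\<integral>\<^sup>+y. H (?R \<omega>, y) \<partial>distr P ?M2 ?R') \<partial>P)"
    unfolding Suc_rep by (rule indep_nn_integral(1)[OF P indv Hm])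
  have Am: "(\<lambda>\<omega>. \<integral>\<^sup>+y. H (?R \<omega>, y) \<partial>distr P ?M2 ?R') \<in> borel_measurable P"
    by (rule indep_nn_integral(2)[OF P indv Hm])
  have pw: "(\<integral>\<^sup>+y. H (?R \<omega>, y) \<partial>distr P ?M2 ?R') + ennreal (?e * (norm (Dg (fst (?S k \<omega>))))\<^sup>2)
      \<le> ennreal ((1 + CC * ?e\<^sup>2) * Phi (fst (?S k \<omega>)) (snd (?S k \<omega>)) + 2 * CC * ?e\<^sup>2)" for \<omega>
    unfolding inner_eq H'_def rep[symmetric] by (rule kernel[OF eps])
  note stm[measurable] = st_meas_P[OF DGmE xm]
  note Dgm[measurable] = Dg_meas
  note gmm[measurable] = g_meas
  have "(\<integral>\<^sup>+\<omega>. ennreal (Phi (fst (?S (Suc k) \<omega>)) (snd (?S (Suc k) \<omega>))) \<partial>P)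
       + ennreal ?e * (\<integral>\<^sup>+\<omega>. ennreal ((norm (Dg (fst (?S k \<omega>))))\<^sup>2) \<partial>P)
     = (\<integral>\<^sup>+\<omega>. (\<integral>\<^sup>+y. H (?R \<omega>, y) \<partial>distr P ?M2 ?R') + ennreal (?e * (norm (Dg (fst (?S k \<omega>))))\<^sup>2) \<partial>P)"
  proof -
    have Dm: "(\<lambda>\<omega>. ennreal ((norm (Dg (fst (?S k \<omega>))))\<^sup>2)) \<in> borel_measurable P" by measurable
    have Dm2: "(\<lambda>\<omega>. ennreal (?e * (norm (Dg (fst (?S k \<omega>))))\<^sup>2)) \<in> borel_measurable P" by measurable
    have "ennreal ?e * (\<integral>\<^sup>+\<omega>. ennreal ((norm (Dg (fst (?S k \<omega>))))\<^sup>2) \<partial>P)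
        = (\<integral>\<^sup>+\<omega>. ennreal ?e * ennreal ((norm (Dg (fst (?S k \<omega>))))\<^sup>2) \<partial>P)"
      by (rule nn_integral_cmult[OF Dm, symmetric])
    also have "\<dots> = (\<integral>\<^sup>+\<omega>. ennreal (?e * (norm (Dg (fst (?S k \<omega>))))\<^sup>2) \<partial>P)"
      using eps by (simp add: ennreal_mult)
    finally have e: "ennreal ?e * (\<integral>\<^sup>+\<omega>. ennreal ((norm (Dg (fst (?S k \<omega>))))\<^sup>2) \<partial>P)
        = (\<integral>\<^sup>+\<omega>. ennreal (?e * (norm (Dg (fst (?S k \<omega>))))\<^sup>2) \<partial>P)" .
    show ?thesis unfolding A e by (rule nn_integral_add[OF Am Dm2, symmetric])
  qed
  also have "\<dots> \<le> (\<integral>\<^sup>+\<omega>. ennreal ((1 + CC * ?e\<^sup>2) * Phi (fst (?S k \<omega>)) (snd (?S k \<omega>)) + 2 * CC * ?e\<^sup>2) \<partial>P)"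
    by (rule nn_integral_mono[OF pw])
  also have "\<dots> = ennreal (1 + CC * ?e\<^sup>2) * (\<integral>\<^sup>+\<omega>. ennreal (Phi (fst (?S k \<omega>)) (snd (?S k \<omega>))) \<partial>P)
       + ennreal (2 * CC * ?e\<^sup>2)"
  proof -
    have nn: "0 \<le> CC" by (rule CC_nonneg)
    have "(\<integral>\<^sup>+\<omega>. ennreal ((1 + CC * ?e\<^sup>2) * Phi (fst (?S k \<omega>)) (snd (?S k \<omega>)) + 2 * CC * ?e\<^sup>2) \<partial>P)
       = (\<integral>\<^sup>+\<omega>. ennreal (1 + CC * ?e\<^sup>2) * ennreal (Phi (fst (?S k \<omega>)) (snd (?S k \<omega>))) + ennreal (2 * CC * ?e\<^sup>2) \<partial>P)"
      using nn Phi_nonneg by (intro nn_integral_cong) (simp add: ennreal_plus ennreal_mult)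
    also have "\<dots> = ennreal (1 + CC * ?e\<^sup>2) * (\<integral>\<^sup>+\<omega>. ennreal (Phi (fst (?S k \<omega>)) (snd (?S k \<omega>))) \<partial>P)
       + ennreal (2 * CC * ?e\<^sup>2)"
      unfolding Phi_def by (subst nn_integral_add) (auto simp: nn_integral_cmult emeasure_space_1)
    finally show ?thesis .
  qed
  finally show ?thesis .
qed


theorem lemma8:
  fixes P :: "'w measure" and E :: "'b measure"
    and \<xi> :: "nat \<Rightarrow> 'w \<Rightarrow> 'b"
    and g :: "'a::euclidean_space \<Rightarrow> real" and Dg :: "'a \<Rightarrow> 'a"
    and G :: "'a \<Rightarrow> 'b \<Rightarrow> real" and DG :: "'a \<Rightarrow> 'b \<Rightarrow> 'a"
    and \<theta>1 v0 :: 'a and \<alpha> Mc :: real and \<epsilon> :: "nat \<Rightarrow> real"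
  assumes prob: "prob_space P"
    and xi_meas: "\<And>n. \<xi> n \<in> measurable P E"
    and xi_indep: "prob_space.indep_vars P (\<lambda>_. E) \<xi> {1..}"
    and G_meas: "\<And>x. (\<lambda>e. G x e) \<in> borel_measurable E"
    and DG_meas: "(\<lambda>(x, e). DG x e) \<in> borel_measurable (borel \<Otimes>\<^sub>M E)"
    and G_diff: "\<And>x e. e \<in> space E \<Longrightarrow> ((\<lambda>y. G y e) has_derivative (\<lambda>h. DG x e \<bullet> h)) (at x)"
    and g_mean: "\<And>x n. n \<ge> 1 \<Longrightarrow> has_bochner_integral (distr P E (\<xi> n)) (G x) (g x)"
    and g_nonneg: "\<And>x. g x \<ge> 0"
    and g_diff: "\<And>x. (g has_derivative (\<lambda>h. Dg x \<bullet> h)) (at x)"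
    and Dg_cont: "continuous_on UNIV Dg"
    and crit: "\<exists>\<theta>. Dg \<theta> = 0"
    and lip: "\<exists>c>0. \<forall>x y. norm (Dg x - Dg y) \<le> c * norm (x - y)"
    and Mc_pos: "Mc > 0"
    and var_bound: "\<And>\<theta> n. n \<ge> 1 \<Longrightarrow>
        (\<integral>\<^sup>+ e. ennreal ((norm (Dg \<theta> - DG \<theta> e))\<^sup>2) \<partial>distr P E (\<xi> n))
          \<le> ennreal (Mc * (1 + g \<theta>))"
    and alpha: "0 \<le> \<alpha>" "\<alpha> < 1"
    and eps_pos: "\<And>n. n \<ge> 1 \<Longrightarrow> \<epsilon> n > 0"
    and eps_mono: "\<And>n. n \<ge> 1 \<Longrightarrow> \<epsilon> (Suc n) \<le> \<epsilon> n"
    and eps_lim: "\<epsilon> \<longlonglongrightarrow> 0"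
    and eps_sum: "\<not> summable (\<lambda>n. \<epsilon> (Suc n))"
    and eps_sq: "summable (\<lambda>n. (\<epsilon> (Suc n))\<^sup>2)"
  shows "(\<exists>B>0. \<forall>n\<ge>1.
            (\<Sum>t=1..n. ennreal (\<epsilon> t) *
               (\<integral>\<^sup>+ \<omega>. ennreal ((norm (Dg (sgdm_theta \<alpha> \<epsilon> DG \<xi> \<theta>1 v0 t \<omega>)))\<^sup>2) \<partial>P))
            < ennreal B)
       \<and> (AE \<omega> in P. summable (\<lambda>t. \<epsilon> (Suc t) *
               (norm (Dg (sgdm_theta \<alpha> \<epsilon> DG \<xi> \<theta>1 v0 (Suc t) \<omega>)))\<^sup>2))"
proof -
  interpret P: prob_space P by (rule prob)
  obtain c where cpos: "c > 0" and lipc: "\<And>x y. norm (Dg x - Dg y) \<le> c * norm (x - y)"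
    using lip by blast
  define e1 where "e1 = \<epsilon> 1"
  have e1: "0 < e1" using eps_pos[of 1] by (simp add: e1_def)
  have eps_le: "\<epsilon> (Suc k) \<le> e1" for k
  proof (induction k)
    case 0 then show ?case by (simp add: e1_def)
  next
    case (Suc k) then show ?case using eps_mono[of "Suc k"] by simp
  qed
  have epsS: "0 < \<epsilon> (Suc k)" for k using eps_pos by simp
  have kn: "kern (distr P E (\<xi> n)) g Dg G DG c Mc \<alpha> e1" if n: "n \<ge> 1" for n
  proof -
    have sets_eq: "sets (borel \<Otimes>\<^sub>M distr P E (\<xi> n)) = sets (borel \<Otimes>\<^sub>M E)"
      by (rule sets_pair_measure_cong) simp_all
    show ?thesis
    proof (rule kern.intro)
      show "unb (distr P E (\<xi> n)) g Dg G DG c Mc"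
      proof (rule unb.intro)
        show "prob_space (distr P E (\<xi> n))" by (rule P.prob_space_distr[OF xi_meas])
        show "(\<lambda>(x, e). DG x e) \<in> borel_measurable (borel \<Otimes>\<^sub>M distr P E (\<xi> n))"
          using DG_meas by (subst measurable_cong_sets[OF sets_eq refl])
        show "((\<lambda>y. G y e) has_derivative (\<lambda>h. DG x e \<bullet> h)) (at x)" if "e \<in> space (distr P E (\<xi> n))" for x e
          using G_diff that by simp
        show "has_bochner_integral (distr P E (\<xi> n)) (G x) (g x)" for x by (rule g_mean[OF n])
        show "(\<integral>\<^sup>+ e. ennreal ((norm (Dg \<theta> - DG \<theta> e))\<^sup>2) \<partial>distr P E (\<xi> n)) \<le> ennreal (Mc * (1 + g \<theta>))" for \<theta>
          by (rule var_bound[OF n])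
      qed (use g_diff lipc cpos Mc_pos g_nonneg in auto)
    qed (use alpha e1 cpos in \<open>auto simp: kern_axioms_def\<close>)
  qed
  have knS: "kern (distr P E (\<xi> (Suc k))) g Dg G DG c Mc \<alpha> e1" for k by (rule kn) simp
  define Cc where "Cc = kern.CC c Mc \<alpha> e1"
  define \<Phi> where "\<Phi> = kern.Phi g c \<alpha> e1"
  have Cc0: "0 \<le> Cc" unfolding Cc_def by (rule kern.CC_nonneg[OF knS])
  have Phi0: "0 \<le> \<Phi> x y" for x y unfolding \<Phi>_def by (rule kern.Phi_nonneg[OF knS])
  define \<Psi> where "\<Psi> k = (\<integral>\<^sup>+\<omega>. ennreal (\<Phi> (fst (sgdm_state \<alpha> \<epsilon> DG \<xi> \<theta>1 v0 k \<omega>)) (snd (sgdm_state \<alpha> \<epsilon> DG \<xi> \<theta>1 v0 k \<omega>))) \<partial>P)" for k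
  define I where "I t = (\<integral>\<^sup>+ \<omega>. ennreal ((norm (Dg (sgdm_theta \<alpha> \<epsilon> DG \<xi> \<theta>1 v0 t \<omega>)))\<^sup>2) \<partial>P)" for t
  have I_Suc: "I (Suc k) = (\<integral>\<^sup>+\<omega>. ennreal ((norm (Dg (fst (sgdm_state \<alpha> \<epsilon> DG \<xi> \<theta>1 v0 k \<omega>))))\<^sup>2) \<partial>P)" for k
    by (simp add: I_def sgdm_theta_def)
  have step: "\<Psi> (Suc k) + ennreal (\<epsilon> (Suc k)) * I (Suc k)
      \<le> ennreal (1 + Cc * (\<epsilon> (Suc k))\<^sup>2) * \<Psi> k + ennreal (2 * Cc * (\<epsilon> (Suc k))\<^sup>2)" for k
    unfolding \<Psi>_def I_Suc Cc_def \<Phi>_def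
    by (rule step_ineq[where \<epsilon>=\<epsilon> and k=k, OF prob xi_meas xi_indep DG_meas knS epsS eps_le])
  define Pn where "Pn n = (\<Prod>j=1..n. 1 + Cc * (\<epsilon> j)\<^sup>2)" for n
  define Qn where "Qn n = (\<Sum>j=1..n. 2 * Cc * (\<epsilon> j)\<^sup>2)" for n
  define Sn where "Sn n = (\<Sum>t=1..n. ennreal (\<epsilon> t) * I t)" for n
  have Pn1: "1 \<le> Pn n" for n unfolding Pn_def by (rule prod_ge_1) (use Cc0 in auto)
  have Qn0: "0 \<le> Qn n" for n unfolding Qn_def using Cc0 by (auto intro: sum_nonneg)
  have claim: "\<Psi> n + Sn n \<le> ennreal (Pn n) * (\<Psi> 0 + ennreal (Qn n))" for n
  proof (induction n)
    case 0 show ?case by (simp add: Sn_def Pn_def Qn_def)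
  next
    case (Suc n)
    define a where "a = 1 + Cc * (\<epsilon> (Suc n))\<^sup>2"
    define b where "b = 2 * Cc * (\<epsilon> (Suc n))\<^sup>2"
    have a1: "1 \<le> a" using Cc0 by (simp add: a_def)
    have b0: "0 \<le> b" using Cc0 by (simp add: b_def)
    have SnS: "Sn (Suc n) = Sn n + ennreal (\<epsilon> (Suc n)) * I (Suc n)" by (simp add: Sn_def)
    have PnS: "Pn (Suc n) = Pn n * a" by (simp add: Pn_def a_def)
    have QnS: "Qn (Suc n) = Qn n + b" by (simp add: Qn_def b_def)
    have ea: "1 \<le> ennreal a" using ennreal_leI[OF a1] by simp
    have "\<Psi> (Suc n) + Sn (Suc n) = (\<Psi> (Suc n) + ennreal (\<epsilon> (Suc n)) * I (Suc n)) + Sn n"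
      by (simp add: SnS ac_simps)
    also have "\<dots> \<le> (ennreal a * \<Psi> n + ennreal b) + Sn n"
      unfolding a_def b_def by (intro add_right_mono step)
    also have "\<dots> \<le> (ennreal a * \<Psi> n + ennreal b) + ennreal a * Sn n"
    proof -
      have "Sn n = 1 * Sn n" by simp
      also have "\<dots> \<le> ennreal a * Sn n" by (rule mult_right_mono[OF ea]) simp
      finally show ?thesis by (rule add_left_mono)
    qed
    also have "\<dots> = ennreal a * (\<Psi> n + Sn n) + ennreal b" by (simp add: distrib_left ac_simps)
    also have "\<dots> \<le> ennreal a * (ennreal (Pn n) * (\<Psi> 0 + ennreal (Qn n))) + ennreal b"
      by (intro add_right_mono mult_left_mono Suc.IH) auto
    also have "\<dots> \<le> ennreal (Pn (Suc n)) * (\<Psi> 0 + ennreal (Qn (Suc n)))"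
    proof -
      have P1: "1 \<le> ennreal (Pn (Suc n))" using ennreal_leI[OF Pn1[of "Suc n"]] by simp
      have "ennreal b = 1 * ennreal b" by simp
      also have "\<dots> \<le> ennreal (Pn (Suc n)) * ennreal b" by (rule mult_right_mono[OF P1]) simp
      finally have bb: "ennreal b \<le> ennreal (Pn (Suc n)) * ennreal b" .
      have "ennreal (Pn (Suc n)) * (\<Psi> 0 + ennreal (Qn (Suc n)))
          = ennreal a * (ennreal (Pn n) * (\<Psi> 0 + ennreal (Qn n))) + ennreal (Pn (Suc n)) * ennreal b"
        using Pn1[of n] a1 Qn0[of n] b0
        by (simp add: PnS QnS ennreal_mult ennreal_plus distrib_left ac_simps)
      then show ?thesis using bb by (simp add: add_left_mono)
    qed
    finally show ?case .
  qed
  have Psi0: "\<Psi> 0 = ennreal (\<Phi> \<theta>1 v0)" by (simp add: \<Psi>_def P.emeasure_space_1)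
  define Ssq where "Ssq = (\<Sum>j. (\<epsilon> (Suc j))\<^sup>2)"
  have partial: "(\<Sum>j=1..n. (\<epsilon> j)\<^sup>2) \<le> Ssq" for n
    unfolding Ssq_def sum_bounds_lt_plus1[symmetric] by (rule sum_le_suminf[OF eps_sq]) auto
  have Ssq0: "0 \<le> Ssq" unfolding Ssq_def by (rule suminf_nonneg[OF eps_sq]) simp
  have Pn_le: "Pn n \<le> exp (Cc * Ssq)" for n
  proof -
    have "Pn n \<le> (\<Prod>j=1..n. exp (Cc * (\<epsilon> j)\<^sup>2))"
      unfolding Pn_def using Cc0 by (intro prod_mono) auto
    also have "\<dots> = exp (\<Sum>j=1..n. Cc * (\<epsilon> j)\<^sup>2)" by (simp add: exp_sum)
    also have "\<dots> = exp (Cc * (\<Sum>j=1..n. (\<epsilon> j)\<^sup>2))" by (simp add: sum_distrib_left)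
    also have "\<dots> \<le> exp (Cc * Ssq)" using partial[of n] Cc0 by (simp add: mult_left_mono)
    finally show ?thesis .
  qed
  have Qn_le: "Qn n \<le> 2 * Cc * Ssq" for n
  proof -
    have "Qn n = 2 * Cc * (\<Sum>j=1..n. (\<epsilon> j)\<^sup>2)" by (simp add: Qn_def sum_distrib_left)
    also have "\<dots> \<le> 2 * Cc * Ssq" using partial[of n] Cc0 by (simp add: mult_left_mono)
    finally show ?thesis .
  qed
  define B0 where "B0 = exp (Cc * Ssq) * (\<Phi> \<theta>1 v0 + 2 * Cc * Ssq)"
  have B0: "0 \<le> B0" unfolding B0_def using Phi0[of \<theta>1 v0] Cc0 Ssq0 by simp
  have Sn_le: "Sn n \<le> ennreal B0" for n
  proof -
    have "Sn n \<le> \<Psi> n + Sn n" by simp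
    also have "\<dots> \<le> ennreal (Pn n) * (\<Psi> 0 + ennreal (Qn n))" by (rule claim)
    also have "\<dots> = ennreal (Pn n * (\<Phi> \<theta>1 v0 + Qn n))"
      using Pn1[of n] Qn0[of n] Phi0[of \<theta>1 v0] by (simp add: Psi0 ennreal_mult ennreal_plus)
    also have "\<dots> \<le> ennreal B0"
      unfolding B0_def using Pn1[of n] Qn0[of n] Phi0[of \<theta>1 v0] Pn_le[of n] Qn_le[of n]
      by (intro ennreal_leI mult_mono) auto
    finally show ?thesis .
  qed
  have part1: "\<exists>B>0. \<forall>n\<ge>1. Sn n < ennreal B"
  proof (intro exI[of _ "B0 + 1"] conjI allI impI)
    show "0 < B0 + 1" using B0 by simp
    fix n :: nat
    have "ennreal B0 < ennreal (B0 + 1)" using B0 by (simp add: ennreal_lessI)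
    then show "Sn n < ennreal (B0 + 1)" using Sn_le[of n] by (rule le_less_trans[rotated])
  qed
  define f where "f t \<omega> = \<epsilon> (Suc t) * (norm (Dg (sgdm_theta \<alpha> \<epsilon> DG \<xi> \<theta>1 v0 (Suc t) \<omega>)))\<^sup>2" for t \<omega>
  have Dgm[measurable]: "Dg \<in> borel_measurable borel" by (rule kern.Dg_meas[OF knS])
  note stm[measurable] = st_meas_P[OF DG_meas xi_meas]
  have fm[measurable]: "(\<lambda>\<omega>. f t \<omega>) \<in> borel_measurable P" for t
    unfolding f_def sgdm_theta_def by simp
  have f0: "0 \<le> f t \<omega>" for t \<omega> unfolding f_def using epsS[of t] by simp
  have intf: "(\<integral>\<^sup>+\<omega>. ennreal (f t \<omega>) \<partial>P) = ennreal (\<epsilon> (Suc t)) * I (Suc t)" for t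
  proof -
    have "(\<integral>\<^sup>+\<omega>. ennreal (f t \<omega>) \<partial>P) = (\<integral>\<^sup>+\<omega>. ennreal (\<epsilon> (Suc t)) * ennreal ((norm (Dg (sgdm_theta \<alpha> \<epsilon> DG \<xi> \<theta>1 v0 (Suc t) \<omega>)))\<^sup>2) \<partial>P)"
      unfolding f_def using epsS[of t] by (simp add: ennreal_mult)
    also have "\<dots> = ennreal (\<epsilon> (Suc t)) * I (Suc t)"
      unfolding I_def by (rule nn_integral_cmult) (simp add: sgdm_theta_def)
    finally show ?thesis .
  qed
  have "(\<integral>\<^sup>+\<omega>. (\<Sum>t. ennreal (f t \<omega>)) \<partial>P) = (\<Sum>t. \<integral>\<^sup>+\<omega>. ennreal (f t \<omega>) \<partial>P)"
    by (rule nn_integral_suminf) simp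
  also have "\<dots> = (\<Sum>t. ennreal (\<epsilon> (Suc t)) * I (Suc t))" by (simp add: intf)
  also have "\<dots> = (SUP n. \<Sum>t<n. ennreal (\<epsilon> (Suc t)) * I (Suc t))" by (rule suminf_eq_SUP)
  also have "\<dots> \<le> ennreal B0"
  proof (rule SUP_least)
    fix n
    have "(\<Sum>t<n. ennreal (\<epsilon> (Suc t)) * I (Suc t)) = Sn n"
      unfolding Sn_def by (rule sum_bounds_lt_plus1)
    then show "(\<Sum>t<n. ennreal (\<epsilon> (Suc t)) * I (Suc t)) \<le> ennreal B0" using Sn_le[of n] by simp
  qed
  finally have fin: "(\<integral>\<^sup>+\<omega>. (\<Sum>t. ennreal (f t \<omega>)) \<partial>P) \<noteq> \<infinity>"
    using ennreal_less_top[of B0] by (auto simp: top_unique)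
  have "AE \<omega> in P. (\<Sum>t. ennreal (f t \<omega>)) \<noteq> \<infinity>"
    by (rule nn_integral_PInf_AE[OF _ fin]) simp
  then have part2: "AE \<omega> in P. summable (\<lambda>t. f t \<omega>)"
    by eventually_elim (rule summable_suminf_not_top[OF f0], simp)
  show ?thesis
    using part1 part2 unfolding Sn_def I_def f_def by simp
qed


end
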